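(* Let $L$ be a linear forest with $k$ vertices and let $n$ be a positive integer. If $G$ and $G'$ are $n$-vertex graphs all of whose components are cycles with at least $k+1$ vertices, then $s(G,L)=s(G',L)$; that is, the number of induced copies of $L$ depends only on $L$ and $n$.
   Context: A linear forest is a disjoint union of paths. For graphs $G$ and $H$, $s(G,H)$ is the number of vertex subsets $X\subseteq V(G)$ such that $G[X]$ is isomorphic to $H$. *)

theory Defs
  imports Main
begin

definition simple_graph :: "'a set \<Rightarrow> 'a set set \<Rightarrow> bool" where
  "simple_graph V E \<longleftrightarrow> finite V \<and>
     (\<forall>e\<in>E. \<exists>u v. e = {u, v} \<and> u \<noteq> v \<and> u \<in> V \<and> v \<in> V)"

definition path_edges :: "'a list \<Rightarrow> 'a set set" where
  "path_edges xs = {{xs ! i, xs ! Suc i} | i. Suc i < length xs}"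

definition cycle_edges :: "'a list \<Rightarrow> 'a set set" where
  "cycle_edges xs = path_edges xs \<union> {{last xs, hd xs}}"

definition linear_forest :: "'a set \<Rightarrow> 'a set set \<Rightarrow> bool" where
  "linear_forest V E \<longleftrightarrow> simple_graph V E \<and>
     (\<exists>Ps :: 'a list set.
        (\<forall>p\<in>Ps. p \<noteq> [] \<and> distinct p) \<and>
        (\<forall>p\<in>Ps. \<forall>q\<in>Ps. p \<noteq> q \<longrightarrow> set p \<inter> set q = {}) \<and>
        V = (\<Union>p\<in>Ps. set p) \<and> E = (\<Union>p\<in>Ps. path_edges p))"

text \<open>A graph all of whose components are cycles, each with at least m vertices
  (and, being cycles of a simple graph, at least 3 vertices).\<close>
definition cycles_at_least :: "nat \<Rightarrow> 'a set \<Rightarrow> 'a set set \<Rightarrow> bool" where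
  "cycles_at_least m V E \<longleftrightarrow> simple_graph V E \<and>
     (\<exists>Cs :: 'a list set.
        (\<forall>c\<in>Cs. distinct c \<and> length c \<ge> 3 \<and> length c \<ge> m) \<and>
        (\<forall>c\<in>Cs. \<forall>d\<in>Cs. c \<noteq> d \<longrightarrow> set c \<inter> set d = {}) \<and>
        V = (\<Union>c\<in>Cs. set c) \<and> E = (\<Union>c\<in>Cs. cycle_edges c))"

definition induced_edges :: "'a set set \<Rightarrow> 'a set \<Rightarrow> 'a set set" where
  "induced_edges E X = {e \<in> E. e \<subseteq> X}"

definition graph_iso :: "'a set \<Rightarrow> 'a set set \<Rightarrow> 'b set \<Rightarrow> 'b set set \<Rightarrow> bool" where
  "graph_iso V1 E1 V2 E2 \<longleftrightarrow> (\<exists>f. bij_betw f V1 V2 \<and>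
     (\<forall>u\<in>V1. \<forall>v\<in>V1. {u, v} \<in> E1 \<longleftrightarrow> {f u, f v} \<in> E2))"

definition induced_count :: "'a set \<Rightarrow> 'a set set \<Rightarrow> 'b set \<Rightarrow> 'b set set \<Rightarrow> nat" where
  "induced_count V E VH EH = card {X. X \<subseteq> V \<and> graph_iso X (induced_edges E X) VH EH}"

end

theory Submission
  imports Defs "HOL-Library.FuncSet"
begin

fun ff :: "int \<Rightarrow> nat \<Rightarrow> int" where
  "ff x 0 = 1"
| "ff x (Suc k) = x * ff (x - 1) k"

lemma ff_Suc': "ff x (Suc k) = ff x k * (x - int k)"
proof (induction k arbitrary: x)
  case 0 then show ?case by simp
next
  case (Suc k)
  have "ff x (Suc (Suc k)) = x * ff (x - 1) (Suc k)" by simp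
  also have "\<dots> = x * (ff (x - 1) k * (x - 1 - int k))" using Suc.IH[of "x - 1"] by simp
  also have "\<dots> = ff x (Suc k) * (x - int (Suc k))" by (simp add: algebra_simps)
  finally show ?case .
qed

lemma ff_pascal: "ff (x + 1) (Suc k) = ff x (Suc k) + int (Suc k) * ff x k"
proof -
  have "ff (x+1) (Suc k) = (x+1) * ff x k" by simp
  also have "\<dots> = ff x k * (x - int k) + int (Suc k) * ff x k" by (simp add: algebra_simps)
  finally show ?thesis using ff_Suc'[of x k] by simp
qed

lemma ff_zero_nat: "0 \<le> x \<Longrightarrow> x < int k \<Longrightarrow> ff x k = 0"
proof (induction k arbitrary: x)
  case 0 then show ?case by simp
next
  case (Suc k)
  show ?case
  proof (cases "x = 0")
    case True then show ?thesis by simp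
  next
    case False
    then have "ff (x - 1) k = 0" using Suc by (intro Suc.IH) auto
    then show ?thesis by simp
  qed
qed

lemma ff_nonneg: "0 \<le> x \<Longrightarrow> 0 \<le> ff x k"
proof (induction k arbitrary: x)
  case 0 then show ?case by simp
next
  case (Suc k)
  show ?case
  proof (cases "x = 0")
    case True then show ?thesis by simp
  next
    case False
    then have "0 \<le> ff (x - 1) k" using Suc by (intro Suc.IH) auto
    then show ?thesis using Suc by simp
  qed
qed

definition JJ :: "('i \<Rightarrow> nat) \<Rightarrow> 'i set \<Rightarrow> int" where
  "JJ a T = int (\<Sum>i\<in>T. a i)"

definition gg :: "('i \<Rightarrow> nat) \<Rightarrow> 'i set \<Rightarrow> int \<Rightarrow> int" where
  "gg a T m = (if T = {} then 1 else m * ff (m - JJ a T - 1) (card T - 1))"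

lemma JJ_remove: "finite T \<Longrightarrow> i \<in> T \<Longrightarrow> JJ a (T - {i}) = JJ a T - int (a i)"
  unfolding JJ_def by (simp add: sum_diff1_nat sum_nonneg_leq_bound member_le_sum of_nat_diff)

lemma gg_delta:
  assumes fin: "finite T" and ne: "T \<noteq> {}"
  shows "gg a T m - gg a T (m - 1) = (\<Sum>i\<in>T. gg a (T - {i}) (m - int (a i) - 1))"
proof (cases "card T = 1")
  case True
  then obtain i where T: "T = {i}" using card_1_singletonE by blast
  show ?thesis by (simp add: T gg_def)
next
  case False
  have "card T \<noteq> 0" using fin ne by simp
  with False have c2: "card T \<ge> 2" by linarith
  define k where "k = card T - 2"
  have k: "card T = Suc (Suc k)" using c2 unfolding k_def by linarith
  define J where "J = JJ a T"
  have each: "gg a (T - {i}) (m - int (a i) - 1) = (m - int (a i) - 1) * ff (m - J - 2) k"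
    if "i \<in> T" for i
  proof -
    have "card (T - {i}) = Suc k" using k that fin by simp
    then have "T - {i} \<noteq> {}" by (metis card.empty Zero_not_Suc)
    moreover have "card (T - {i}) = Suc k" using k that fin by simp
    moreover have "JJ a (T - {i}) = J - int (a i)" using JJ_remove[OF fin that] J_def by simp
    ultimately show ?thesis unfolding gg_def by (simp add: algebra_simps)
  qed
  have "(\<Sum>i\<in>T. gg a (T - {i}) (m - int (a i) - 1)) = (\<Sum>i\<in>T. (m - int (a i) - 1) * ff (m - J - 2) k)"
    using each by simp
  also have "\<dots> = (\<Sum>i\<in>T. (m - 1) - int (a i)) * ff (m - J - 2) k"
    unfolding sum_distrib_right by (intro sum.cong refl) (simp add: algebra_simps)
  also have "(\<Sum>i\<in>T. (m - 1) - int (a i)) = int (card T) * (m - 1) - J"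
    by (simp add: sum_subtractf J_def JJ_def)
  finally have R: "(\<Sum>i\<in>T. gg a (T - {i}) (m - int (a i) - 1)) = (int (card T) * (m - 1) - J) * ff (m - J - 2) k" .
  have L1: "gg a T m = m * (m - J - 1) * ff (m - J - 2) k"
  proof -
    have "gg a T m = m * ff (m - J - 1) (Suc k)" using ne k unfolding gg_def J_def by simp
    also have "ff (m - J - 1) (Suc k) = (m - J - 1) * ff (m - J - 2) k" by simp
    finally show ?thesis by simp
  qed
  have L2: "gg a T (m - 1) = (m - 1) * ((m - J - 2) - int k) * ff (m - J - 2) k"
  proof -
    have "gg a T (m - 1) = (m - 1) * ff (m - J - 2) (Suc k)" using ne k unfolding gg_def J_def by simp
    also have "ff (m - J - 2) (Suc k) = ff (m - J - 2) k * ((m - J - 2) - int k)" by (rule ff_Suc')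
    finally show ?thesis by simp
  qed
  have "int (card T) = int k + 2" using k by simp
  then show ?thesis unfolding R L1 L2 by (simp add: algebra_simps)
qed

lemma sum_swap_pow:
  assumes "finite T"
  shows "(\<Sum>S\<in>Pow T. \<Sum>i\<in>T - S. F S i) = (\<Sum>i\<in>T. \<Sum>S\<in>Pow (T - {i}). F S i)"
proof -
  have "(\<Sum>S\<in>Pow T. \<Sum>i\<in>{i\<in>T. i \<notin> S}. F S i) = (\<Sum>i\<in>T. \<Sum>S\<in>{S\<in>Pow T. i \<notin> S}. F S i)"
    using assms by (intro sum.swap_restrict) auto
  moreover have "\<And>S. {i\<in>T. i \<notin> S} = T - S" by auto
  moreover have "\<And>i. {S\<in>Pow T. i \<notin> S} = Pow (T - {i})" by auto
  ultimately show ?thesis by simp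
qed

lemma gg_merge:
  assumes "finite T"
  shows "(\<Sum>S\<in>Pow T. gg a S m1 * gg a (T - S) m2) = gg a T (m1 + m2)"
  using assms
proof (induction "card T" arbitrary: T m1 m2 rule: less_induct)
  case less
  show ?case
  proof (cases "T = {}")
    case True then show ?thesis by (simp add: gg_def)
  next
    case ne: False
    define h where "h m2 = (\<Sum>S\<in>Pow T. gg a S m1 * gg a (T - S) m2) - gg a T (m1 + m2)" for m2
    have base: "h 0 = 0"
    proof -
      have "(\<Sum>S\<in>Pow T. gg a S m1 * gg a (T - S) 0) = (\<Sum>S\<in>{T}. gg a S m1 * gg a (T - S) 0)"
        using less.prems by (intro sum.mono_neutral_right) (auto simp: gg_def)
      then show ?thesis unfolding h_def by (simp add: gg_def)
    qed
    have step: "h x = h (x - 1)" for x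
    proof -
      have D: "(\<Sum>S\<in>Pow T. gg a S m1 * gg a (T - S) x) - (\<Sum>S\<in>Pow T. gg a S m1 * gg a (T - S) (x - 1))
          = (\<Sum>S\<in>Pow T. \<Sum>i\<in>T - S. gg a S m1 * gg a (T - S - {i}) (x - int (a i) - 1))"
      proof -
        have "(\<Sum>S\<in>Pow T. gg a S m1 * gg a (T - S) x) - (\<Sum>S\<in>Pow T. gg a S m1 * gg a (T - S) (x - 1))
            = (\<Sum>S\<in>Pow T. gg a S m1 * (gg a (T - S) x - gg a (T - S) (x - 1)))"
          by (simp add: sum_subtractf[symmetric] right_diff_distrib)
        also have "\<dots> = (\<Sum>S\<in>Pow T. \<Sum>i\<in>T - S. gg a S m1 * gg a (T - S - {i}) (x - int (a i) - 1))"
        proof (intro sum.cong refl)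
          fix S assume S: "S \<in> Pow T"
          show "gg a S m1 * (gg a (T - S) x - gg a (T - S) (x - 1)) = (\<Sum>i\<in>T - S. gg a S m1 * gg a (T - S - {i}) (x - int (a i) - 1))"
          proof (cases "T - S = {}")
            case True then show ?thesis unfolding True by (simp add: gg_def)
          next
            case False
            then show ?thesis using gg_delta[of "T - S" a x] less.prems
              by (simp add: sum_distrib_left)
          qed
        qed
        finally show ?thesis .
      qed
      also have "\<dots> = (\<Sum>i\<in>T. \<Sum>S\<in>Pow (T - {i}). gg a S m1 * gg a (T - S - {i}) (x - int (a i) - 1))"
        by (rule sum_swap_pow[OF less.prems])
      also have "\<dots> = (\<Sum>i\<in>T. \<Sum>S\<in>Pow (T - {i}). gg a S m1 * gg a (T - {i} - S) (x - int (a i) - 1))"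
        by (intro sum.cong refl arg_cong2[where f="(*)"] arg_cong2[where f="gg a"]) auto
      also have "\<dots> = (\<Sum>i\<in>T. gg a (T - {i}) (m1 + (x - int (a i) - 1)))"
      proof (intro sum.cong refl)
        fix i assume "i \<in> T"
        then have "card (T - {i}) < card T" using less.prems by (rule card_Diff1_less[rotated])
        then show "(\<Sum>S\<in>Pow (T - {i}). gg a S m1 * gg a (T - {i} - S) (x - int (a i) - 1)) = gg a (T - {i}) (m1 + (x - int (a i) - 1))"
          using less.prems by (intro less.hyps) auto
      qed
      also have "\<dots> = (\<Sum>i\<in>T. gg a (T - {i}) (m1 + x - int (a i) - 1))"
        by (intro sum.cong refl) (simp add: algebra_simps)
      also have "\<dots> = gg a T (m1 + x) - gg a T (m1 + x - 1)"
        using gg_delta[OF less.prems ne, of a "m1 + x"] by simp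
      finally have calc: "(\<Sum>S\<in>Pow T. gg a S m1 * gg a (T - S) x) - (\<Sum>S\<in>Pow T. gg a S m1 * gg a (T - S) (x - 1))
          = gg a T (m1 + x) - gg a T (m1 + x - 1)" .
      have e: "gg a T (m1 + (x - 1)) = gg a T (m1 + x - 1)" by (simp add: algebra_simps)
      show ?thesis unfolding h_def using calc e by linarith
    qed
    have "h m2 = 0"
    proof (rule int_induct[where k=0, of "\<lambda>x. h x = 0"])
      show "h 0 = 0" by (rule base)
    next
      fix i :: int assume "h i = 0"
      then show "h (i + 1) = 0" using step[of "i+1"] by simp
    next
      fix i :: int assume "h i = 0"
      then show "h (i - 1) = 0" using step[of i] by simp
    qed
    then show ?thesis unfolding h_def by simp
  qed
qed

definition sepL :: "int \<Rightarrow> nat \<Rightarrow> int \<Rightarrow> nat \<Rightarrow> bool" where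
  "sepL s a s' a' \<longleftrightarrow> (\<forall>t<a. \<forall>t'<a'. 1 < \<bar>s + int t - (s' + int t')\<bar>)"

definition QpS :: "('i \<Rightarrow> nat) \<Rightarrow> int \<Rightarrow> 'i set \<Rightarrow> ('i \<Rightarrow> int) set" where
  "QpS a u T = {st \<in> T \<rightarrow>\<^sub>E {0..<u}. (\<forall>i\<in>T. st i + int (a i) \<le> u) \<and>
      (\<forall>i\<in>T. \<forall>l\<in>T. i \<noteq> l \<longrightarrow> sepL (st i) (a i) (st l) (a l))}"

definition ffz :: "int \<Rightarrow> nat \<Rightarrow> int" where
  "ffz x k = (if x < 0 then 0 else ff x k)"

lemma sepL_shift: "sepL (s + c) a (s' + c) a' \<longleftrightarrow> sepL s a s' a'"
  unfolding sepL_def by (simp add: algebra_simps)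

lemma sepL_shift': "sepL (s - c) a (s' - c) a' \<longleftrightarrow> sepL s a s' a'"
  unfolding sepL_def by (simp add: algebra_simps)

lemma sepL_zero:
  assumes "0 \<le> s" "1 \<le> a" "1 \<le> a'"
  shows "sepL 0 a s a' \<longleftrightarrow> int a + 1 \<le> s"
proof
  assume sep: "sepL 0 a s a'"
  show "int a + 1 \<le> s"
  proof (rule ccontr)
    assume "\<not> int a + 1 \<le> s"
    then have sa: "s \<le> int a" by simp
    show False
    proof (cases "s = 0")
      case True
      have H: "\<forall>t<a. \<forall>t'<a'. 1 < \<bar>0 + int t - (s + int t')\<bar>" using sep unfolding sepL_def .
      have "1 < \<bar>0 + int 0 - (s + int 0)\<bar>" using H[rule_format, of 0 0] assms by simp
      then show False using True by simp
    next
      case False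
      then have "nat (s - 1) < a" using sa assms by linarith
      moreover have H: "\<forall>t<a. \<forall>t'<a'. 1 < \<bar>0 + int t - (s + int t')\<bar>" using sep unfolding sepL_def .
      ultimately have "1 < \<bar>0 + int (nat (s - 1)) - (s + int 0)\<bar>" using assms by (intro H[rule_format]) auto
      then show False using False assms by simp
    qed
  qed
next
  assume "int a + 1 \<le> s"
  then show "sepL 0 a s a'" unfolding sepL_def by auto
qed

lemma restrict_eq_PiE: "st \<in> T \<rightarrow>\<^sub>E B \<Longrightarrow> (\<And>i. i \<in> T \<Longrightarrow> g i = st i) \<Longrightarrow> restrict g T = st"
  by (auto simp: PiE_iff extensional_def restrict_def fun_eq_iff)

lemma QpS_finite: "finite T \<Longrightarrow> finite (QpS a u T)"
  unfolding QpS_def by (rule finite_subset[of _ "T \<rightarrow>\<^sub>E {0..<u}"]) (auto intro: finite_PiE)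

lemma QpS_neg: "finite T \<Longrightarrow> card (QpS a (-1) T) = (if T = {} then 1 else 0)"
proof -
  assume fin: "finite T"
  show ?thesis
  proof (cases "T = {}")
    case True
    then have "QpS a (-1) T = {\<lambda>_. undefined}" unfolding QpS_def by auto
    then show ?thesis using True by simp
  next
    case False
    then have "QpS a (-1) T = {}" unfolding QpS_def by (auto simp: PiE_eq_empty_iff)
    then show ?thesis using False by simp
  qed
qed

lemma QpS_rec:
  assumes fin: "finite T" and pos: "\<forall>i\<in>T. 1 \<le> a i" and u: "0 \<le> u"
  shows "card (QpS a u T) = card (QpS a (u - 1) T) +
     (\<Sum>i\<in>{i\<in>T. int (a i) \<le> u}. card (QpS a (u - int (a i) - 1) (T - {i})))"
proof -
  define A where "A = QpS a u T"
  define A0 where "A0 = {st\<in>A. \<forall>i\<in>T. 1 \<le> st i}"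
  define Ai where "Ai i = {st\<in>A. st i = 0}" for i
  define T' where "T' = {i\<in>T. int (a i) \<le> u}"
  have finA: "finite A" unfolding A_def using QpS_finite[OF fin] .
  have cover: "A = A0 \<union> (\<Union>i\<in>T'. Ai i)"
  proof (intro equalityI subsetI)
    fix st assume st: "st \<in> A"
    show "st \<in> A0 \<union> (\<Union>i\<in>T'. Ai i)"
    proof (cases "\<forall>i\<in>T. 1 \<le> st i")
      case True then show ?thesis using st unfolding A0_def by auto
    next
      case False
      then obtain i where i: "i \<in> T" "st i < 1" by auto
      then have "st i = 0" using st unfolding A_def QpS_def by (auto simp: PiE_iff)
      moreover have "int (a i) \<le> u" using st i \<open>st i = 0\<close> unfolding A_def QpS_def by force
      ultimately show ?thesis using st i unfolding Ai_def T'_def by auto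
    qed
  qed (auto simp: A0_def Ai_def)
  have disj1: "A0 \<inter> (\<Union>i\<in>T'. Ai i) = {}"
    unfolding A0_def Ai_def T'_def by force
  have disj2: "Ai i \<inter> Ai l = {}" if "i \<in> T'" "l \<in> T'" "i \<noteq> l" for i l
  proof -
    have "st i \<noteq> 0 \<or> st l \<noteq> 0" if "st \<in> A" for st
    proof -
      have "sepL (st i) (a i) (st l) (a l)" using that \<open>i \<in> T'\<close> \<open>l \<in> T'\<close> \<open>i \<noteq> l\<close>
        unfolding A_def QpS_def T'_def by auto
      moreover have "1 \<le> a i" "1 \<le> a l" using pos \<open>i \<in> T'\<close> \<open>l \<in> T'\<close> unfolding T'_def by auto
      ultimately show ?thesis unfolding sepL_def by (auto dest!: spec[of _ 0])
    qed
    then show ?thesis unfolding Ai_def by auto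
  qed
  have finT': "finite T'" using fin unfolding T'_def by auto
  have "card A = card A0 + card (\<Union>i\<in>T'. Ai i)"
    using cover disj1 finA by (metis card_Un_disjoint finite_Un)
  also have "card (\<Union>i\<in>T'. Ai i) = (\<Sum>i\<in>T'. card (Ai i))"
    using finT' finA disj2 unfolding Ai_def by (intro card_UN_disjoint) auto
  also have "card A0 = card (QpS a (u - 1) T)"
  proof -
    have "bij_betw (\<lambda>st. restrict (\<lambda>i. st i - 1) T) A0 (QpS a (u - 1) T)"
    proof (rule bij_betw_byWitness[where f'="\<lambda>st. restrict (\<lambda>i. st i + 1) T"])
      show "\<forall>st\<in>A0. restrict (\<lambda>i. restrict (\<lambda>i. st i - 1) T i + 1) T = st"
        unfolding A0_def A_def QpS_def by (auto intro!: restrict_eq_PiE)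
      show "\<forall>st\<in>QpS a (u - 1) T. restrict (\<lambda>i. restrict (\<lambda>i. st i + 1) T i - 1) T = st"
        unfolding QpS_def by (auto intro!: restrict_eq_PiE)
      show "(\<lambda>st. restrict (\<lambda>i. st i - 1) T) ` A0 \<subseteq> QpS a (u - 1) T"
        unfolding A0_def A_def QpS_def using sepL_shift'[of _ 1]
        by (fastforce simp: PiE_iff)
      show "(\<lambda>st. restrict (\<lambda>i. st i + 1) T) ` QpS a (u - 1) T \<subseteq> A0"
        unfolding A0_def A_def QpS_def using sepL_shift[of _ 1]
        by (fastforce simp: PiE_iff)
    qed
    then show ?thesis by (rule bij_betw_same_card)
  qed
  also have "(\<Sum>i\<in>T'. card (Ai i)) = (\<Sum>i\<in>T'. card (QpS a (u - int (a i) - 1) (T - {i})))"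
  proof (intro sum.cong refl)
    fix i assume iT': "i \<in> T'"
    then have iT: "i \<in> T" and aiu: "int (a i) \<le> u" unfolding T'_def by auto
    have ai1: "1 \<le> a i" using pos iT by auto
    define c where "c = int (a i) + 1"
    have c0: "0 \<le> c" unfolding c_def by simp
    have key: "sepL 0 (a i) s (a l) \<longleftrightarrow> c \<le> s" if "0 \<le> s" "l \<in> T" for s l
      using sepL_zero[OF that(1) ai1] pos that unfolding c_def by auto
    have "bij_betw (\<lambda>st. restrict (\<lambda>l. st l - c) (T - {i})) (Ai i) (QpS a (u - int (a i) - 1) (T - {i}))"
    proof (rule bij_betw_byWitness[where f'="\<lambda>st. restrict (\<lambda>l. if l = i then 0 else st l + c) T"])
      show "\<forall>st\<in>Ai i. restrict (\<lambda>l. if l = i then 0 else restrict (\<lambda>l. st l - c) (T - {i}) l + c) T = st"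
        unfolding Ai_def A_def QpS_def by (auto intro!: restrict_eq_PiE)
      show "\<forall>st\<in>QpS a (u - int (a i) - 1) (T - {i}). restrict (\<lambda>l. restrict (\<lambda>l. if l = i then 0 else st l + c) T l - c) (T - {i}) = st"
        unfolding QpS_def by (auto intro!: restrict_eq_PiE)
      show "(\<lambda>st. restrict (\<lambda>l. st l - c) (T - {i})) ` Ai i \<subseteq> QpS a (u - int (a i) - 1) (T - {i})"
      proof
        fix x assume "x \<in> (\<lambda>st. restrict (\<lambda>l. st l - c) (T - {i})) ` Ai i"
        then obtain st where st: "st \<in> Ai i" and x: "x = restrict (\<lambda>l. st l - c) (T - {i})" by auto
        have stA: "st \<in> QpS a u T" and st0: "st i = 0" using st unfolding Ai_def A_def by auto
        have ge: "c \<le> st l" if "l \<in> T" "l \<noteq> i" for l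
        proof -
          have "sepL (st i) (a i) (st l) (a l)" using stA that iT unfolding QpS_def by auto
          moreover have "0 \<le> st l" using stA that unfolding QpS_def by (auto simp: PiE_iff)
          ultimately show ?thesis using key that st0 by auto
        qed
        have b1: "0 \<le> st l" "st l + int (a l) \<le> u" "1 \<le> a l" if "l \<in> T" for l
          using stA that pos unfolding QpS_def by (auto simp: PiE_iff)
        have s1: "sepL (st l) (a l) (st l') (a l')" if "l \<in> T" "l' \<in> T" "l \<noteq> l'" for l l'
          using stA that unfolding QpS_def by auto
        have "x \<in> (T - {i}) \<rightarrow>\<^sub>E {0..<u - int (a i) - 1}"
          unfolding x using ge b1 unfolding c_def by (force simp: PiE_iff)
        moreover have "\<forall>l\<in>T - {i}. x l + int (a l) \<le> u - int (a i) - 1"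
        proof (intro ballI)
          fix l assume "l \<in> T - {i}"
          then show "x l + int (a l) \<le> u - int (a i) - 1" using b1(2)[of l] unfolding x c_def by simp
        qed
        moreover have "\<forall>l\<in>T - {i}. \<forall>l'\<in>T - {i}. l \<noteq> l' \<longrightarrow> sepL (x l) (a l) (x l') (a l')"
          unfolding x using s1 sepL_shift'[of _ c] by simp
        ultimately show "x \<in> QpS a (u - int (a i) - 1) (T - {i})" unfolding QpS_def by blast
      qed
      show "(\<lambda>st. restrict (\<lambda>l. if l = i then 0 else st l + c) T) ` QpS a (u - int (a i) - 1) (T - {i}) \<subseteq> Ai i"
      proof
        fix x assume "x \<in> (\<lambda>st. restrict (\<lambda>l. if l = i then 0 else st l + c) T) ` QpS a (u - int (a i) - 1) (T - {i})"
        then obtain st where st: "st \<in> QpS a (u - int (a i) - 1) (T - {i})"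
          and x: "x = restrict (\<lambda>l. if l = i then 0 else st l + c) T" by auto
        have P: "st l \<in> {0..<u - int (a i) - 1}" "st l + int (a l) \<le> u - int (a i) - 1" if "l \<in> T" "l \<noteq> i" for l
          using st that unfolding QpS_def by (auto simp: PiE_iff)
        have S: "sepL (st l) (a l) (st l') (a l')" if "l \<in> T" "l \<noteq> i" "l' \<in> T" "l' \<noteq> i" "l \<noteq> l'" for l l'
          using st that unfolding QpS_def by auto
        have xi: "x i = 0" using iT x by simp
        have xl: "x l = st l + c" if "l \<in> T" "l \<noteq> i" for l using that x by simp
        have sepx: "sepL (x l) (a l) (x l') (a l')" if "l \<in> T" "l' \<in> T" "l \<noteq> l'" for l l'
        proof (cases "l = i")
          case True
          then show ?thesis using key[of "x l'" l'] that xl[of l'] P[of l'] xi c0 by auto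
        next
          case False
          show ?thesis
          proof (cases "l' = i")
            case True
            have "sepL 0 (a l') (x l) (a l)" using key[of "x l" l] that xl[of l] P[of l] False True c0 by auto
            then show ?thesis using True xi unfolding sepL_def by (auto simp: abs_minus_commute)
          next
            case False
            then show ?thesis using xl that \<open>l \<noteq> i\<close> S[of l l'] sepL_shift[of _ c] by simp
          qed
        qed
        have xr: "x l \<in> {0..<u}" if "l \<in> T" for l
        proof (cases "l = i")
          case True then show ?thesis using xi aiu ai1 by simp
        next
          case False then show ?thesis using xl[OF that False] P(1)[OF that False] c0 unfolding c_def by simp
        qed
        have "x \<in> T \<rightarrow>\<^sub>E {0..<u}"
          using xr x by (auto simp: PiE_iff)
        moreover have "\<forall>l\<in>T. x l + int (a l) \<le> u"
        proof
          fix l assume "l \<in> T"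
          show "x l + int (a l) \<le> u"
          proof (cases "l = i")
            case True then show ?thesis using xi aiu by simp
          next
            case False then show ?thesis using xl[OF \<open>l \<in> T\<close> False] P(2)[OF \<open>l \<in> T\<close> False] unfolding c_def by simp
          qed
        qed
        ultimately show "x \<in> Ai i" unfolding Ai_def A_def QpS_def using xi sepx by auto
      qed
    qed
    then show "card (Ai i) = card (QpS a (u - int (a i) - 1) (T - {i}))" by (rule bij_betw_same_card)
  qed
  finally show ?thesis unfolding A_def T'_def .
qed

lemma JJ_ge: "finite T \<Longrightarrow> i \<in> T \<Longrightarrow> int (a i) \<le> JJ a T"
  unfolding JJ_def of_nat_le_iff by (rule member_le_sum) auto

lemma JJ_pos: "finite T \<Longrightarrow> T \<noteq> {} \<Longrightarrow> \<forall>i\<in>T. 1 \<le> a i \<Longrightarrow> 1 \<le> JJ a T"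
  using JJ_ge by (metis all_not_in_conv of_nat_1 of_nat_le_iff order_trans)

lemma ffz_step:
  assumes k: "1 \<le> k" and c: "x \<ge> 1 \<Longrightarrow> c = k"
  shows "ffz x k = ffz (x - 1) k + int c * ffz (x - 1) (k - 1)"
proof (cases "x \<ge> 1")
  case True
  obtain k' where k': "k = Suc k'" using k by (cases k) auto
  have "ff x k = ff (x - 1) k + int k * ff (x - 1) k'"
    using ff_pascal[of "x - 1" k'] k' by simp
  then show ?thesis using True c k' unfolding ffz_def by simp
next
  case False
  then have "ffz x k = 0" unfolding ffz_def using ff_zero_nat[of x k] k by auto
  moreover have "ffz (x - 1) k = 0" "ffz (x - 1) (k - 1) = 0" using False unfolding ffz_def by auto
  ultimately show ?thesis by simp
qed

lemma Qp_formula: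
  assumes "finite T" "\<forall>i\<in>T. 1 \<le> a i"
  shows "int (card (QpS a (int n - 1) T)) = ffz (int n - JJ a T) (card T)"
  using assms
proof (induction n arbitrary: T rule: less_induct)
  case (less n)
  show ?case
  proof (cases n)
    case 0
    show ?thesis
    proof (cases "T = {}")
      case True then show ?thesis using 0 QpS_neg[OF less.prems(1), of a] by (simp add: ffz_def JJ_def)
    next
      case False
      then have "1 \<le> JJ a T" using JJ_pos less.prems by blast
      then show ?thesis using 0 QpS_neg[OF less.prems(1), of a] False by (simp add: ffz_def)
    qed
  next
    case (Suc n')
    define u where "u = int n'"
    have un: "int n - 1 = u" unfolding u_def Suc by simp
    define T' where "T' = {i\<in>T. int (a i) \<le> u}"
    have rec: "card (QpS a u T) = card (QpS a (u - 1) T) + (\<Sum>i\<in>T'. card (QpS a (u - int (a i) - 1) (T - {i})))"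
      unfolding T'_def using QpS_rec[OF less.prems, of u] u_def by simp
    have IH1: "int (card (QpS a (u - 1) T)) = ffz (int n - JJ a T - 1) (card T)"
      using less.IH[of n' T] less.prems Suc u_def by (simp add: algebra_simps)
    have IH2: "int (card (QpS a (u - int (a i) - 1) (T - {i}))) = ffz (int n - JJ a T - 1) (card T - 1)"
      if "i \<in> T'" for i
    proof -
      have i: "i \<in> T" "a i \<le> n'" using that unfolding T'_def u_def by auto
      have "int (card (QpS a (int (n' - a i) - 1) (T - {i}))) = ffz (int (n' - a i) - JJ a (T - {i})) (card (T - {i}))"
        using less.prems i Suc by (intro less.IH) auto
      moreover have "int (n' - a i) - 1 = u - int (a i) - 1" using i u_def by simp
      moreover have "int (n' - a i) - JJ a (T - {i}) = int n - JJ a T - 1"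
        using i JJ_remove[OF less.prems(1) i(1), of a] Suc by simp
      moreover have "card (T - {i}) = card T - 1" using i less.prems by simp
      ultimately show ?thesis by simp
    qed
    have "int (card (QpS a u T)) = ffz (int n - JJ a T - 1) (card T) + int (card T') * ffz (int n - JJ a T - 1) (card T - 1)"
      unfolding rec using IH1 IH2 by simp
    also have "\<dots> = ffz (int n - JJ a T) (card T)"
    proof (cases "T = {}")
      case True then show ?thesis unfolding T'_def using Suc by (simp add: ffz_def JJ_def)
    next
      case False
      have "1 \<le> card T" using False less.prems by (simp add: Suc_leI card_gt_0_iff)
      moreover have "card T' = card T" if "int n - JJ a T \<ge> 1"
      proof -
        have "int (a i) \<le> u" if "i \<in> T" for i using JJ_ge[OF less.prems(1) that, of a] \<open>int n - JJ a T \<ge> 1\<close> un by linarith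
        then have "T' = T" unfolding T'_def by blast
        then show ?thesis by simp
      qed
      ultimately show ?thesis using ffz_step[of "card T" "int n - JJ a T" "card T'"] by simp
    qed
    finally show ?thesis using un by simp
  qed
qed

definition sepC :: "int \<Rightarrow> int \<Rightarrow> nat \<Rightarrow> int \<Rightarrow> nat \<Rightarrow> bool" where
  "sepC m s a s' a' \<longleftrightarrow> (\<forall>t<a. \<forall>t'<a'. (s + int t - (s' + int t')) mod m \<notin> {0, 1, m - 1})"

definition QcS :: "('i \<Rightarrow> nat) \<Rightarrow> int \<Rightarrow> 'i set \<Rightarrow> ('i \<Rightarrow> int) set" where
  "QcS a m T = {st \<in> T \<rightarrow>\<^sub>E {0..<m}. (\<forall>i\<in>T. \<forall>l\<in>T. i \<noteq> l \<longrightarrow> sepC m (st i) (a i) (st l) (a l))}"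

lemma mod_small_set:
  fixes d m :: int
  assumes "\<bar>d\<bar> \<le> m - 2"
  shows "d mod m \<in> {0, 1, m - 1} \<longleftrightarrow> \<bar>d\<bar> \<le> 1"
proof (cases "d \<ge> 0")
  case True
  then have "d mod m = d" using assms by (intro mod_pos_pos_trivial) auto
  then show ?thesis using True assms by auto
next
  case False
  have "(d + m) mod m = d + m" using False assms by (intro mod_pos_pos_trivial) auto
  then have "d mod m = d + m" by simp
  then show ?thesis using False assms by auto
qed

lemma sepC_cong:
  assumes "\<And>t t'. (x + int t - (y + int t')) mod m = (x' + int t - (y' + int t')) mod m"
  shows "sepC m x a y a' \<longleftrightarrow> sepC m x' a y' a'"
  unfolding sepC_def using assms by simp

lemma mod_shift_eq: "(x mod m + int t - (y mod m + int t')) mod m = (x + int t - (y + int t')) mod (m::int)"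
proof -
  have "x mod m + int t - (y mod m + int t') = (x + int t - (y + int t')) + (y div m - x div m) * m"
    using div_mult_mod_eq[of x m] div_mult_mod_eq[of y m] by (simp add: algebra_simps)
  then show ?thesis by (metis mod_mult_self1)
qed

lemma sepC_mod: "sepC m (x mod m) a (y mod m) a' \<longleftrightarrow> sepC m x a y a'"
  by (rule sepC_cong) (rule mod_shift_eq)

lemma sepC_shift: "sepC m (x + c) a (y + c) a' \<longleftrightarrow> sepC m x a y a'"
  by (rule sepC_cong) (simp add: algebra_simps)

lemma sepC_shift': "sepC m (x - c) a (y - c) a' \<longleftrightarrow> sepC m x a y a'"
  by (rule sepC_cong) (simp add: algebra_simps)

lemma sepC_sym:
  assumes "m > 0"
  shows "sepC m x a y a' \<longleftrightarrow> sepC m y a' x a"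
proof -
  have *: "(- d) mod m \<in> {0, 1, m - 1} \<longleftrightarrow> d mod m \<in> {0, 1, m - 1}" for d :: int
  proof -
    have "(- d) mod m = (if d mod m = 0 then 0 else m - d mod m)"
      using assms by (simp add: zmod_zminus1_eq_if)
    moreover have "0 \<le> d mod m" "d mod m < m" using assms by auto
    ultimately show ?thesis by auto
  qed
  show ?thesis unfolding sepC_def using * by (metis minus_diff_eq)
qed

lemma sepC_zero:
  assumes "0 \<le> s" "s < m" "1 \<le> a" "1 \<le> a'" "int a + int a' + 1 \<le> m"
  shows "sepC m 0 a s a' \<longleftrightarrow> int a + 1 \<le> s \<and> s + int a' \<le> m - 1"
proof
  assume sep: "sepC m 0 a s a'"
  have H: "\<forall>t<a. \<forall>t'<a'. (0 + int t - (s + int t')) mod m \<notin> {0, 1, m - 1}" using sep unfolding sepC_def .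
  show "int a + 1 \<le> s \<and> s + int a' \<le> m - 1"
  proof (rule ccontr)
    assume "\<not> (int a + 1 \<le> s \<and> s + int a' \<le> m - 1)"
    then consider "s \<le> int a" | "m \<le> s + int a'" by linarith
    then show False
    proof cases
      case 1
      show False
      proof (cases "s = 0")
        case True
        have "(0 + int 0 - (s + int 0)) mod m \<notin> {0, 1, m - 1}" using H[rule_format, of 0 0] assms by auto
        then show False using True by simp
      next
        case False
        have "nat (s - 1) < a" using 1 False assms by linarith
        then have "(0 + int (nat (s - 1)) - (s + int 0)) mod m \<notin> {0, 1, m - 1}" using H[rule_format, of "nat (s - 1)" 0] assms by auto
        moreover have "(0 + int (nat (s - 1)) - (s + int 0)) = -1" using False assms by simp
        ultimately show False using assms by (simp add: zmod_zminus1_eq_if)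
      qed
    next
      case 2
      have "nat (m - 1 - s) < a'" using 2 assms by linarith
      then have "(0 + int 0 - (s + int (nat (m - 1 - s)))) mod m \<notin> {0, 1, m - 1}" using H[rule_format, of 0 "nat (m - 1 - s)"] assms by auto
      moreover have "(0 + int 0 - (s + int (nat (m - 1 - s)))) = 1 - m" using assms by simp
      moreover have "(1 - m) mod m = 1"
      proof -
        have "(1 - m) mod m = (1 + (-1) * m) mod m" by simp
        also have "\<dots> = 1 mod m" by (rule mod_mult_self1)
        also have "\<dots> = 1" using assms by simp
        finally show ?thesis .
      qed
      ultimately show False by simp
    qed
  qed
next
  assume r: "int a + 1 \<le> s \<and> s + int a' \<le> m - 1"
  show "sepC m 0 a s a'" unfolding sepC_def
  proof (intro allI impI)
    fix t t' assume tt: "t < a" "t' < a'"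
    define d where "d = 0 + int t - (s + int t')"
    have "\<bar>d\<bar> \<le> m - 2" "\<bar>d\<bar> > 1" using r tt unfolding d_def by auto
    then show "d mod m \<notin> {0, 1, m - 1}" using mod_small_set[of d m] by auto
  qed
qed

lemma sepC_sepL:
  assumes "\<And>t t'. t < a \<Longrightarrow> t' < a' \<Longrightarrow> \<bar>s + int t - (s' + int t')\<bar> \<le> m - 2"
  shows "sepC m s a s' a' \<longleftrightarrow> sepL s a s' a'"
  unfolding sepC_def sepL_def using mod_small_set assms by (meson not_le)

lemma JJ_two: "finite T \<Longrightarrow> i \<in> T \<Longrightarrow> l \<in> T \<Longrightarrow> i \<noteq> l \<Longrightarrow> int (a i) + int (a l) \<le> JJ a T"
proof -
  assume "finite T" "i \<in> T" "l \<in> T" "i \<noteq> l"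
  then have "(\<Sum>x\<in>{i, l}. a x) \<le> (\<Sum>x\<in>T. a x)" by (intro sum_mono2) auto
  then have "a i + a l \<le> (\<Sum>x\<in>T. a x)" using \<open>i \<noteq> l\<close> by simp
  then have "int (a i + a l) \<le> int (\<Sum>x\<in>T. a x)" by (simp only: of_nat_le_iff)
  then show ?thesis by (simp only: JJ_def of_nat_add)
qed

lemma QcS_finite: "finite T \<Longrightarrow> finite (QcS a m T)"
  unfolding QcS_def by (rule finite_subset[of _ "T \<rightarrow>\<^sub>E {0..<m}"]) (auto intro: finite_PiE)

lemma QcS_empty: "card (QcS a m {}) = 1"
proof -
  have "QcS a m {} = {\<lambda>_. undefined}" unfolding QcS_def by auto
  then show ?thesis by simp
qed

lemma Qc_formula:
  assumes fin: "finite T" and ne: "T \<noteq> {}" and pos: "\<forall>i\<in>T. 1 \<le> a i" and big: "JJ a T + 1 \<le> m"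
  shows "int (card (QcS a m T)) = gg a T m"
proof -
  obtain i0 where i0: "i0 \<in> T" using ne by auto
  have a0: "1 \<le> a i0" using pos i0 by auto
  have J0: "int (a i0) \<le> JJ a T" using JJ_ge[OF fin i0] .
  have m0: "m > 0" using big J0 a0 by linarith
  define A where "A = QcS a m T"
  define B where "B r = {st\<in>A. st i0 = r}" for r
  have finA: "finite A" unfolding A_def by (rule QcS_finite[OF fin])
  have cover: "A = (\<Union>r\<in>{0..<m}. B r)"
    unfolding B_def A_def QcS_def using i0 by (auto simp: PiE_iff)
  have cardB: "card (B r) = card (B 0)" if r: "r \<in> {0..<m}" for r
  proof -
    have "bij_betw (\<lambda>st. restrict (\<lambda>l. (st l - r) mod m) T) (B r) (B 0)"
    proof (rule bij_betw_byWitness[where f'="\<lambda>st. restrict (\<lambda>l. (st l + r) mod m) T"])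
      show "\<forall>st\<in>B r. restrict (\<lambda>l. (restrict (\<lambda>l. (st l - r) mod m) T l + r) mod m) T = st"
      proof
        fix st assume st: "st \<in> B r"
        then have P: "st \<in> T \<rightarrow>\<^sub>E {0..<m}" unfolding B_def A_def QcS_def by auto
        show "restrict (\<lambda>l. (restrict (\<lambda>l. (st l - r) mod m) T l + r) mod m) T = st"
        proof (rule restrict_eq_PiE[OF P])
          fix l assume l: "l \<in> T"
          have "((st l - r) mod m + r) mod m = (st l - r + r) mod m" by (simp add: mod_add_left_eq)
          also have "\<dots> = st l" using P l by (auto simp: PiE_iff)
          finally show "(restrict (\<lambda>l. (st l - r) mod m) T l + r) mod m = st l" using l by simp
        qed
      qed
      show "\<forall>st\<in>B 0. restrict (\<lambda>l. (restrict (\<lambda>l. (st l + r) mod m) T l - r) mod m) T = st"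
      proof
        fix st assume st: "st \<in> B 0"
        then have P: "st \<in> T \<rightarrow>\<^sub>E {0..<m}" unfolding B_def A_def QcS_def by auto
        show "restrict (\<lambda>l. (restrict (\<lambda>l. (st l + r) mod m) T l - r) mod m) T = st"
        proof (rule restrict_eq_PiE[OF P])
          fix l assume l: "l \<in> T"
          have "((st l + r) mod m - r) mod m = (st l + r - r) mod m" by (simp add: mod_diff_left_eq)
          also have "\<dots> = st l" using P l by (auto simp: PiE_iff)
          finally show "(restrict (\<lambda>l. (st l + r) mod m) T l - r) mod m = st l" using l by simp
        qed
      qed
      show "(\<lambda>st. restrict (\<lambda>l. (st l - r) mod m) T) ` B r \<subseteq> B 0"
      proof
        fix x assume "x \<in> (\<lambda>st. restrict (\<lambda>l. (st l - r) mod m) T) ` B r"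
        then obtain st where st: "st \<in> B r" and x: "x = restrict (\<lambda>l. (st l - r) mod m) T" by auto
        have S: "sepC m (st i) (a i) (st l) (a l)" if "i \<in> T" "l \<in> T" "i \<noteq> l" for i l
          using st that unfolding B_def A_def QcS_def by auto
        have "x \<in> T \<rightarrow>\<^sub>E {0..<m}" unfolding x using m0 by (auto simp: PiE_iff)
        moreover have "x i0 = 0" using st i0 unfolding x B_def by simp
        moreover have "sepC m (x i) (a i) (x l) (a l)" if "i \<in> T" "l \<in> T" "i \<noteq> l" for i l
          using S[OF that] that unfolding x by (simp add: sepC_mod sepC_shift')
        ultimately show "x \<in> B 0" unfolding B_def A_def QcS_def by auto
      qed
      show "(\<lambda>st. restrict (\<lambda>l. (st l + r) mod m) T) ` B 0 \<subseteq> B r"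
      proof
        fix x assume "x \<in> (\<lambda>st. restrict (\<lambda>l. (st l + r) mod m) T) ` B 0"
        then obtain st where st: "st \<in> B 0" and x: "x = restrict (\<lambda>l. (st l + r) mod m) T" by auto
        have S: "sepC m (st i) (a i) (st l) (a l)" if "i \<in> T" "l \<in> T" "i \<noteq> l" for i l
          using st that unfolding B_def A_def QcS_def by auto
        have "x \<in> T \<rightarrow>\<^sub>E {0..<m}" unfolding x using m0 by (auto simp: PiE_iff)
        moreover have "x i0 = r" using st i0 r unfolding x B_def by simp
        moreover have "sepC m (x i) (a i) (x l) (a l)" if "i \<in> T" "l \<in> T" "i \<noteq> l" for i l
          using S[OF that] that unfolding x by (simp add: sepC_mod sepC_shift)
        ultimately show "x \<in> B r" unfolding B_def A_def QcS_def by auto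
      qed
    qed
    then show ?thesis by (rule bij_betw_same_card)
  qed
  have "card A = (\<Sum>r\<in>{0..<m}. card (B r))"
  proof -
    have "finite (B r)" for r using finA unfolding B_def by auto
    moreover have "B r \<inter> B r' = {}" if "r \<noteq> r'" for r r' using that unfolding B_def by auto
    ultimately have "card (\<Union>r\<in>{0..<m}. B r) = (\<Sum>r\<in>{0..<m}. card (B r))"
      by (intro card_UN_disjoint) auto
    then show ?thesis using cover by simp
  qed
  also have "\<dots> = (\<Sum>r\<in>{0..<m}. card (B 0))" by (intro sum.cong refl cardB)
  also have "\<dots> = nat m * card (B 0)" by simp
  finally have cA: "card A = nat m * card (B 0)" .
  define c where "c = int (a i0) + 1"
  define u where "u = m - int (a i0) - 2"
  have "bij_betw (\<lambda>st. restrict (\<lambda>l. st l - c) (T - {i0})) (B 0) (QpS a u (T - {i0}))"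
  proof (rule bij_betw_byWitness[where f'="\<lambda>st. restrict (\<lambda>l. if l = i0 then 0 else st l + c) T"])
    show "\<forall>st\<in>B 0. restrict (\<lambda>l. if l = i0 then 0 else restrict (\<lambda>l. st l - c) (T - {i0}) l + c) T = st"
      unfolding B_def A_def QcS_def by (auto intro!: restrict_eq_PiE)
    show "\<forall>st\<in>QpS a u (T - {i0}). restrict (\<lambda>l. restrict (\<lambda>l. if l = i0 then 0 else st l + c) T l - c) (T - {i0}) = st"
      unfolding QpS_def by (auto intro!: restrict_eq_PiE)
    show "(\<lambda>st. restrict (\<lambda>l. st l - c) (T - {i0})) ` B 0 \<subseteq> QpS a u (T - {i0})"
    proof
      fix x assume "x \<in> (\<lambda>st. restrict (\<lambda>l. st l - c) (T - {i0})) ` B 0"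
      then obtain st where st: "st \<in> B 0" and x: "x = restrict (\<lambda>l. st l - c) (T - {i0})" by auto
      have P: "st \<in> T \<rightarrow>\<^sub>E {0..<m}" and st0: "st i0 = 0" using st unfolding B_def A_def QcS_def by auto
      have S: "sepC m (st i) (a i) (st l) (a l)" if "i \<in> T" "l \<in> T" "i \<noteq> l" for i l
        using st that unfolding B_def A_def QcS_def by auto
      have W: "c \<le> st l \<and> st l + int (a l) \<le> m - 1" if "l \<in> T" "l \<noteq> i0" for l
      proof -
        have "sepC m 0 (a i0) (st l) (a l)" using S[OF i0 that(1)] that st0 by simp
        moreover have "0 \<le> st l" "st l < m" using P that by (auto simp: PiE_iff)
        moreover have "int (a i0) + int (a l) + 1 \<le> m" using JJ_two[of T i0 l a] fin i0 that big by simp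
        ultimately show ?thesis using sepC_zero[of "st l" m "a i0" "a l"] a0 pos that unfolding c_def by auto
      qed
      have "x \<in> (T - {i0}) \<rightarrow>\<^sub>E {0..<u}"
      proof -
        have "x l \<in> {0..<u}" if "l \<in> T - {i0}" for l
        proof -
          from that have l: "l \<in> T" "l \<noteq> i0" by auto
          have "x l = st l - c" using that unfolding x by simp
          moreover have "1 \<le> a l" using pos l by auto
          ultimately show ?thesis using W[OF l] unfolding u_def c_def by simp
        qed
        then show ?thesis unfolding x by (auto simp: PiE_iff)
      qed
      moreover have "\<forall>l\<in>T - {i0}. x l + int (a l) \<le> u"
      proof
        fix l assume "l \<in> T - {i0}"
        then have l: "l \<in> T" "l \<noteq> i0" and "x l = st l - c" unfolding x by auto
        then show "x l + int (a l) \<le> u" using W[OF l] unfolding u_def c_def by simp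
      qed
      moreover have "sepL (x l) (a l) (x l') (a l')" if "l \<in> T - {i0}" "l' \<in> T - {i0}" "l \<noteq> l'" for l l'
      proof -
        have "sepC m (st l) (a l) (st l') (a l')" using S that by auto
        moreover have "\<bar>st l + int t - (st l' + int t')\<bar> \<le> m - 2" if "t < a l" "t' < a l'" for t t'
          using W[of l] W[of l'] \<open>l \<in> T - {i0}\<close> \<open>l' \<in> T - {i0}\<close> that unfolding c_def by auto
        ultimately have "sepL (st l) (a l) (st l') (a l')" using sepC_sepL by blast
        then show ?thesis using that unfolding x by (simp add: sepL_shift')
      qed
      ultimately show "x \<in> QpS a u (T - {i0})" unfolding QpS_def by blast
    qed
    show "(\<lambda>st. restrict (\<lambda>l. if l = i0 then 0 else st l + c) T) ` QpS a u (T - {i0}) \<subseteq> B 0"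
    proof
      fix x assume "x \<in> (\<lambda>st. restrict (\<lambda>l. if l = i0 then 0 else st l + c) T) ` QpS a u (T - {i0})"
      then obtain st where st: "st \<in> QpS a u (T - {i0})" and x: "x = restrict (\<lambda>l. if l = i0 then 0 else st l + c) T" by auto
      have P: "0 \<le> st l" "st l + int (a l) \<le> u" if "l \<in> T" "l \<noteq> i0" for l
        using st that unfolding QpS_def by (auto simp: PiE_iff)
      have S: "sepL (st l) (a l) (st l') (a l')" if "l \<in> T - {i0}" "l' \<in> T - {i0}" "l \<noteq> l'" for l l'
        using st that unfolding QpS_def by auto
      have xi: "x i0 = 0" using i0 x by simp
      have xl: "x l = st l + c" if "l \<in> T" "l \<noteq> i0" for l using that x by simp
      have W: "c \<le> x l \<and> x l + int (a l) \<le> m - 1" if "l \<in> T" "l \<noteq> i0" for l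
        using P[OF that] xl[OF that] unfolding u_def c_def by simp
      have R: "x l \<in> {0..<m}" if "l \<in> T" for l
      proof (cases "l = i0")
        case True then show ?thesis using xi m0 by simp
      next
        case False then show ?thesis using W[OF that False] pos that unfolding c_def by force
      qed
      have Z: "sepC m 0 (a i0) (x l) (a l)" if "l \<in> T" "l \<noteq> i0" for l
      proof -
        have "int (a i0) + int (a l) + 1 \<le> m" using JJ_two[of T i0 l a] fin i0 that big by simp
        then show ?thesis using sepC_zero[of "x l" m "a i0" "a l"] W[OF that] R[OF that(1)] a0 pos that unfolding c_def by auto
      qed
      have sepx: "sepC m (x l) (a l) (x l') (a l')" if "l \<in> T" "l' \<in> T" "l \<noteq> l'" for l l'
      proof (cases "l = i0")
        case True then show ?thesis using Z[of l'] that xi by simp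
      next
        case False
        show ?thesis
        proof (cases "l' = i0")
          case True then show ?thesis using Z[of l] that xi False sepC_sym[OF m0] by metis
        next
          case False
          have "sepL (x l) (a l) (x l') (a l')"
            using S[of l l'] that \<open>l \<noteq> i0\<close> False xl sepL_shift[of _ c] by simp
          moreover have "\<bar>x l + int t - (x l' + int t')\<bar> \<le> m - 2" if "t < a l" "t' < a l'" for t t'
            using W[of l] W[of l'] \<open>l \<in> T\<close> \<open>l' \<in> T\<close> \<open>l \<noteq> i0\<close> False that unfolding c_def by auto
          ultimately show ?thesis using sepC_sepL by blast
        qed
      qed
      have "x \<in> T \<rightarrow>\<^sub>E {0..<m}" using R x by (auto simp: PiE_iff)
      then show "x \<in> B 0" unfolding B_def A_def QcS_def using xi sepx by auto
    qed
  qed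
  then have cB: "card (B 0) = card (QpS a u (T - {i0}))" by (rule bij_betw_same_card)
  have nn: "0 \<le> m - int (a i0) - 1" using big J0 by linarith
  have "int (card (QpS a (int (nat (m - int (a i0) - 1)) - 1) (T - {i0})))
      = ffz (int (nat (m - int (a i0) - 1)) - JJ a (T - {i0})) (card (T - {i0}))"
    using fin pos by (intro Qp_formula) auto
  moreover have "int (nat (m - int (a i0) - 1)) - 1 = u" using nn unfolding u_def by simp
  moreover have "int (nat (m - int (a i0) - 1)) - JJ a (T - {i0}) = m - JJ a T - 1"
    using nn JJ_remove[OF fin i0, of a] by simp
  moreover have "card (T - {i0}) = card T - 1" using fin i0 by simp
  ultimately have cQ: "int (card (B 0)) = ffz (m - JJ a T - 1) (card T - 1)" using cB by simp
  have "int (card (QcS a m T)) = m * ffz (m - JJ a T - 1) (card T - 1)"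
    using cA cQ m0 unfolding A_def by simp
  then show ?thesis unfolding gg_def ffz_def using ne big by simp
qed

definition QaS :: "('i \<Rightarrow> nat) \<Rightarrow> 'x list set \<Rightarrow> 'i set \<Rightarrow> ('i \<Rightarrow> 'x list \<times> int) set" where
  "QaS a Cs T = {st \<in> T \<rightarrow>\<^sub>E (SIGMA c:Cs. {0..<int (length c)}).
     (\<forall>i\<in>T. \<forall>l\<in>T. i \<noteq> l \<longrightarrow> fst (st i) = fst (st l) \<longrightarrow>
        sepC (int (length (fst (st i)))) (snd (st i)) (a i) (snd (st l)) (a l))}"

lemma JJ_mono: "finite T \<Longrightarrow> S \<subseteq> T \<Longrightarrow> JJ a S \<le> JJ a T"
  unfolding JJ_def by (simp add: sum_mono2)

lemma QaS_split:
  assumes fin: "finite T" and c: "c \<notin> Cs" and finC: "finite Cs"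
  shows "card (QaS a (insert c Cs) T) = (\<Sum>S\<in>Pow T. card (QcS a (int (length c)) S) * card (QaS a Cs (T - S)))"
proof -
  define A where "A = QaS a (insert c Cs) T"
  define D where "D S = {st\<in>A. {i\<in>T. fst (st i) = c} = S}" for S
  have finA: "finite A"
  proof -
    have "finite (SIGMA c:insert c Cs. {0..<int (length c)})" using finC by auto
    then show ?thesis unfolding A_def QaS_def using fin
      by (intro finite_subset[OF _ finite_PiE]) auto
  qed
  have cover: "A = (\<Union>S\<in>Pow T. D S)" unfolding D_def by auto
  have cardA: "card A = (\<Sum>S\<in>Pow T. card (D S))"
  proof -
    have "finite (D S)" for S using finA unfolding D_def by auto
    moreover have "D S \<inter> D S' = {}" if "S \<noteq> S'" for S S' using that unfolding D_def by auto
    ultimately have "card (\<Union>S\<in>Pow T. D S) = (\<Sum>S\<in>Pow T. card (D S))"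
      using fin by (intro card_UN_disjoint) auto
    then show ?thesis using cover by simp
  qed
  have cardD: "card (D S) = card (QcS a (int (length c)) S) * card (QaS a Cs (T - S))" if S: "S \<subseteq> T" for S
  proof -
    define m where "m = int (length c)"
    have "bij_betw (\<lambda>st. (restrict (\<lambda>i. snd (st i)) S, restrict st (T - S))) (D S) (QcS a m S \<times> QaS a Cs (T - S))"
    proof (rule bij_betw_byWitness[where f'="\<lambda>(p, q). restrict (\<lambda>i. if i \<in> S then (c, p i) else q i) T"])
      show "\<forall>st\<in>D S. (\<lambda>(p, q). restrict (\<lambda>i. if i \<in> S then (c, p i) else q i) T) (restrict (\<lambda>i. snd (st i)) S, restrict st (T - S)) = st"
      proof
        fix st assume st: "st \<in> D S"
        then have P: "st \<in> T \<rightarrow>\<^sub>E (SIGMA c:insert c Cs. {0..<int (length c)})" and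
          SS: "{i\<in>T. fst (st i) = c} = S" unfolding D_def A_def QaS_def by auto
        show "(\<lambda>(p, q). restrict (\<lambda>i. if i \<in> S then (c, p i) else q i) T) (restrict (\<lambda>i. snd (st i)) S, restrict st (T - S)) = st"
          using SS by (auto intro!: restrict_eq_PiE[OF P] prod_eqI)
      qed
      show "\<forall>pq\<in>QcS a m S \<times> QaS a Cs (T - S). (\<lambda>st. (restrict (\<lambda>i. snd (st i)) S, restrict st (T - S))) ((\<lambda>(p, q). restrict (\<lambda>i. if i \<in> S then (c, p i) else q i) T) pq) = pq"
      proof
        fix pq assume pq: "pq \<in> QcS a m S \<times> QaS a Cs (T - S)"
        obtain p q where pq': "pq = (p, q)" by fastforce
        have P: "p \<in> S \<rightarrow>\<^sub>E {0..<m}" "q \<in> (T - S) \<rightarrow>\<^sub>E (SIGMA c:Cs. {0..<int (length c)})"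
          using pq unfolding pq' QcS_def QaS_def by auto
        have "restrict (\<lambda>i. snd (restrict (\<lambda>i. if i \<in> S then (c, p i) else q i) T i)) S = p"
          using S by (intro restrict_eq_PiE[OF P(1)]) auto
        moreover have "restrict (restrict (\<lambda>i. if i \<in> S then (c, p i) else q i) T) (T - S) = q"
          by (intro restrict_eq_PiE[OF P(2)]) auto
        ultimately show "(\<lambda>st. (restrict (\<lambda>i. snd (st i)) S, restrict st (T - S))) ((\<lambda>(p, q). restrict (\<lambda>i. if i \<in> S then (c, p i) else q i) T) pq) = pq"
          unfolding pq' by simp
      qed
      show "(\<lambda>st. (restrict (\<lambda>i. snd (st i)) S, restrict st (T - S))) ` D S \<subseteq> QcS a m S \<times> QaS a Cs (T - S)"
      proof
        fix x assume "x \<in> (\<lambda>st. (restrict (\<lambda>i. snd (st i)) S, restrict st (T - S))) ` D S"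
        then obtain st where st: "st \<in> D S" and x: "x = (restrict (\<lambda>i. snd (st i)) S, restrict st (T - S))" by auto
        have P: "st \<in> T \<rightarrow>\<^sub>E (SIGMA c:insert c Cs. {0..<int (length c)})" and
          SS: "{i\<in>T. fst (st i) = c} = S" and
          Sep: "\<And>i l. i \<in> T \<Longrightarrow> l \<in> T \<Longrightarrow> i \<noteq> l \<Longrightarrow> fst (st i) = fst (st l) \<Longrightarrow>
                sepC (int (length (fst (st i)))) (snd (st i)) (a i) (snd (st l)) (a l)"
          using st unfolding D_def A_def QaS_def by auto
        have inS: "fst (st i) = c" if "i \<in> S" for i using SS that by auto
        have notS: "fst (st i) \<in> Cs" if "i \<in> T - S" for i using SS that P by (auto simp: PiE_iff)
        have "restrict (\<lambda>i. snd (st i)) S \<in> QcS a m S"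
        proof -
          have "restrict (\<lambda>i. snd (st i)) S \<in> S \<rightarrow>\<^sub>E {0..<m}"
            using P inS S unfolding m_def by (force simp: PiE_iff)
          moreover have "sepC m (snd (st i)) (a i) (snd (st l)) (a l)" if "i \<in> S" "l \<in> S" "i \<noteq> l" for i l
            using Sep[of i l] inS[of i] inS[of l] that S unfolding m_def by auto
          ultimately show ?thesis unfolding QcS_def by auto
        qed
        moreover have "restrict st (T - S) \<in> QaS a Cs (T - S)"
        proof -
          have "restrict st (T - S) \<in> (T - S) \<rightarrow>\<^sub>E (SIGMA c:Cs. {0..<int (length c)})"
            using P notS by (force simp: PiE_iff)
          then show ?thesis unfolding QaS_def using Sep by auto
        qed
        ultimately show "x \<in> QcS a m S \<times> QaS a Cs (T - S)" unfolding x by auto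
      qed
      show "(\<lambda>(p, q). restrict (\<lambda>i. if i \<in> S then (c, p i) else q i) T) ` (QcS a m S \<times> QaS a Cs (T - S)) \<subseteq> D S"
      proof
        fix x assume "x \<in> (\<lambda>(p, q). restrict (\<lambda>i. if i \<in> S then (c, p i) else q i) T) ` (QcS a m S \<times> QaS a Cs (T - S))"
        then obtain p q where pq: "p \<in> QcS a m S" "q \<in> QaS a Cs (T - S)"
          and x: "x = restrict (\<lambda>i. if i \<in> S then (c, p i) else q i) T" by auto
        have P: "p \<in> S \<rightarrow>\<^sub>E {0..<m}" "q \<in> (T - S) \<rightarrow>\<^sub>E (SIGMA c:Cs. {0..<int (length c)})"
          using pq unfolding QcS_def QaS_def by auto
        have Sp: "sepC m (p i) (a i) (p l) (a l)" if "i \<in> S" "l \<in> S" "i \<noteq> l" for i l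
          using pq that unfolding QcS_def by auto
        have Sq: "sepC (int (length (fst (q i)))) (snd (q i)) (a i) (snd (q l)) (a l)"
          if "i \<in> T - S" "l \<in> T - S" "i \<noteq> l" "fst (q i) = fst (q l)" for i l
          using pq that unfolding QaS_def by auto
        have qC: "fst (q i) \<in> Cs" if "i \<in> T - S" for i
        proof -
          have "q i \<in> (SIGMA c:Cs. {0..<int (length c)})" using P(2) that by (auto simp: PiE_iff)
          then show ?thesis by (cases "q i") auto
        qed
        have xin: "x \<in> T \<rightarrow>\<^sub>E (SIGMA c:insert c Cs. {0..<int (length c)})"
          using P unfolding x m_def by (force simp: PiE_iff)
        have xS: "{i\<in>T. fst (x i) = c} = S" using S qC c unfolding x by force
        have xsep: "sepC (int (length (fst (x i)))) (snd (x i)) (a i) (snd (x l)) (a l)"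
          if "i \<in> T" "l \<in> T" "i \<noteq> l" "fst (x i) = fst (x l)" for i l
        proof (cases "i \<in> S")
          case True
          then have "l \<in> S" using that qC c unfolding x by (auto split: if_splits)
          then show ?thesis using Sp[OF True _ that(3)] True that unfolding x m_def by simp
        next
          case False
          then have "l \<notin> S" using that qC c unfolding x by (auto split: if_splits)
          then show ?thesis using Sq[of i l] False that unfolding x by simp
        qed
        show "x \<in> D S" unfolding D_def A_def QaS_def using xin xS xsep by auto
      qed
    qed
    then show ?thesis unfolding m_def by (simp add: bij_betw_same_card card_cartesian_product)
  qed
  show ?thesis unfolding A_def[symmetric] cardA by (intro sum.cong refl cardD) auto
qed

lemma QaS_empty_set: "QaS a ({}::'x list set) T = (if T = {} then {\<lambda>_. undefined} else {})"
  unfolding QaS_def by (auto simp: PiE_eq_empty_iff)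

lemma QaS_empty: "card (QaS a ({}::'x list set) T) = (if T = {} then 1 else 0)"
  by (simp add: QaS_empty_set)

lemma Qa_formula:
  assumes finC: "finite Cs" and fin: "finite T" and pos: "\<forall>i\<in>T. 1 \<le> a i"
    and big: "\<forall>c\<in>Cs. JJ a T + 1 \<le> int (length c)"
  shows "int (card (QaS a Cs T)) = gg a T (\<Sum>c\<in>Cs. int (length c))"
  using finC fin pos big
proof (induction Cs arbitrary: T rule: finite_induct)
  case empty
  show ?case by (simp add: QaS_empty gg_def)
next
  case (insert c Cs)
  have "int (card (QaS a (insert c Cs) T)) = (\<Sum>S\<in>Pow T. int (card (QcS a (int (length c)) S)) * int (card (QaS a Cs (T - S))))"
    using QaS_split[OF insert.prems(1) insert.hyps(2) insert.hyps(1)] by simp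
  also have "\<dots> = (\<Sum>S\<in>Pow T. gg a S (int (length c)) * gg a (T - S) (\<Sum>c\<in>Cs. int (length c)))"
  proof (intro sum.cong refl)
    fix S assume S: "S \<in> Pow T"
    have finS: "finite S" using S insert.prems(1) finite_subset by auto
    have "int (card (QcS a (int (length c)) S)) = gg a S (int (length c))"
    proof (cases "S = {}")
      case True then show ?thesis by (simp add: QcS_empty gg_def)
    next
      case False
      have "JJ a S \<le> JJ a T" using JJ_mono[OF insert.prems(1)] S by auto
      then show ?thesis using insert.prems(2,3) S False finS by (intro Qc_formula) auto
    qed
    moreover have "int (card (QaS a Cs (T - S))) = gg a (T - S) (\<Sum>c\<in>Cs. int (length c))"
    proof (rule insert.IH)
      show "finite (T - S)" using insert.prems(1) by simp
      show "\<forall>i\<in>T - S. 1 \<le> a i" using insert.prems(2) by auto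
      have "JJ a (T - S) \<le> JJ a T" using JJ_mono[OF insert.prems(1)] by auto
      then show "\<forall>c\<in>Cs. JJ a (T - S) + 1 \<le> int (length c)" using insert.prems(3) by force
    qed
    ultimately show "int (card (QcS a (int (length c)) S)) * int (card (QaS a Cs (T - S))) =
        gg a S (int (length c)) * gg a (T - S) (\<Sum>c\<in>Cs. int (length c))" by simp
  qed
  also have "\<dots> = gg a T (int (length c) + (\<Sum>c\<in>Cs. int (length c)))"
    by (rule gg_merge[OF insert.prems(1)])
  finally show ?case using insert.hyps by simp
qed

definition EmbS :: "'u set \<Rightarrow> ('u \<Rightarrow> 'u \<Rightarrow> bool) \<Rightarrow> 'v set \<Rightarrow> ('v \<Rightarrow> 'v \<Rightarrow> bool) \<Rightarrow> ('u \<Rightarrow> 'v) set" where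
  "EmbS VL adjL V adj = {f \<in> VL \<rightarrow>\<^sub>E V. inj_on f VL \<and> (\<forall>u\<in>VL. \<forall>v\<in>VL. adjL u v \<longleftrightarrow> adj (f u) (f v))}"

definition VLm :: "'c list set \<Rightarrow> ('c list \<times> nat) set" where
  "VLm Ps = (SIGMA p:Ps. {..<length p})"

definition adjLm :: "('c list \<times> nat) \<Rightarrow> ('c list \<times> nat) \<Rightarrow> bool" where
  "adjLm u v \<longleftrightarrow> fst u = fst v \<and> (snd v = Suc (snd u) \<or> snd u = Suc (snd v))"

definition VGm :: "'x list set \<Rightarrow> ('x list \<times> int) set" where
  "VGm Cs = (SIGMA c:Cs. {0..<int (length c)})"

definition adjGm :: "('x list \<times> int) \<Rightarrow> ('x list \<times> int) \<Rightarrow> bool" where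
  "adjGm u v \<longleftrightarrow> fst u = fst v \<and> (snd v - snd u) mod int (length (fst u)) \<in> {1, int (length (fst u)) - 1}"

definition ori :: "('c list \<Rightarrow> bool) \<Rightarrow> 'c list \<Rightarrow> nat \<Rightarrow> int" where
  "ori e p r = (if e p then int r else int (length p) - 1 - int r)"

definition Phi :: "'c list set \<Rightarrow> ('c list \<Rightarrow> 'x list \<times> int) \<Rightarrow> ('c list \<Rightarrow> bool) \<Rightarrow> ('c list \<times> nat \<Rightarrow> 'x list \<times> int)" where
  "Phi Ps st e = restrict (\<lambda>(p, r). (fst (st p), (snd (st p) + ori e p r) mod int (length (fst (st p))))) (VLm Ps)"

definition OrS :: "'c list set \<Rightarrow> ('c list \<Rightarrow> bool) set" where
  "OrS Ps = {e \<in> Ps \<rightarrow>\<^sub>E (UNIV :: bool set). \<forall>p\<in>Ps. length p = 1 \<longrightarrow> e p}"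

lemma ori_range: "r < length p \<Longrightarrow> 0 \<le> ori e p r \<and> ori e p r < int (length p)"
  unfolding ori_def by auto

lemma ori_inj: "r < length p \<Longrightarrow> r' < length p \<Longrightarrow> ori e p r = ori e p r' \<Longrightarrow> r = r'"
  unfolding ori_def by (auto split: if_splits)

lemma ori_diff: "\<bar>ori e p r' - ori e p r\<bar> = \<bar>int r' - int r\<bar>"
  unfolding ori_def by auto

lemma ori_surj: "0 \<le> t \<Longrightarrow> t < int (length p) \<Longrightarrow> \<exists>r<length p. ori e p r = t"
proof -
  assume t: "0 \<le> t" "t < int (length p)"
  show ?thesis
  proof (cases "e p")
    case True then show ?thesis using t unfolding ori_def by (intro exI[of _ "nat t"]) auto
  next
    case False then show ?thesis using t unfolding ori_def by (intro exI[of _ "nat (int (length p) - 1 - t)"]) auto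
  qed
qed

lemma mod_diff_zero: "(x::int) mod m = y mod m \<Longrightarrow> (x - y) mod m = 0"
  by (simp add: mod_eq_dvd_iff)

lemma mod_neg_set:
  assumes "(m::int) > 0"
  shows "(- d) mod m \<in> {0, 1, m - 1} \<longleftrightarrow> d mod m \<in> {0, 1, m - 1}"
    and "(- d) mod m \<in> {1, m - 1} \<longleftrightarrow> d mod m \<in> {1, m - 1}"
proof -
  have "(- d) mod m = (if d mod m = 0 then 0 else m - d mod m)"
    using assms by (simp add: zmod_zminus1_eq_if)
  moreover have "0 \<le> d mod m" "d mod m < m" using assms by auto
  ultimately show "(- d) mod m \<in> {0, 1, m - 1} \<longleftrightarrow> d mod m \<in> {0, 1, m - 1}"
    and "(- d) mod m \<in> {1, m - 1} \<longleftrightarrow> d mod m \<in> {1, m - 1}" by auto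
qed

lemma mod_small_set1:
  fixes d m :: int
  assumes "\<bar>d\<bar> \<le> m - 2"
  shows "d mod m \<in> {1, m - 1} \<longleftrightarrow> \<bar>d\<bar> = 1"
proof -
  have m: "m \<ge> 2" using assms by simp
  have "d mod m \<in> {0, 1, m - 1} \<longleftrightarrow> \<bar>d\<bar> \<le> 1" using mod_small_set[OF assms] .
  moreover have "d mod m = 0 \<longleftrightarrow> d = 0"
  proof
    assume "d mod m = 0"
    then have "m dvd d" by (simp add: dvd_eq_mod_eq_0)
    then obtain k where "d = m * k" by auto
    show "d = 0"
    proof (rule ccontr)
      assume "d \<noteq> 0"
      then have "k \<noteq> 0" using \<open>d = m * k\<close> by simp
      then have "1 \<le> \<bar>k\<bar>" by simp
      then have "m * 1 \<le> m * \<bar>k\<bar>" using m by (intro mult_left_mono) auto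
      moreover have "\<bar>d\<bar> = m * \<bar>k\<bar>" using \<open>d = m * k\<close> m by (simp add: abs_mult)
      ultimately show False using assms by simp
    qed
  qed simp
  moreover have "m - 1 \<noteq> 0" "1 \<noteq> (0::int)" using m by auto
  ultimately show ?thesis by (auto split: if_splits)
qed

lemma mod_small_zero:
  fixes d m :: int
  assumes "\<bar>d\<bar> \<le> m - 2" "d mod m = 0"
  shows "d = 0"
proof -
  have m: "m \<ge> 2" using assms(1) by simp
  have "\<bar>d\<bar> \<le> 1" using mod_small_set[OF assms(1)] assms(2) by simp
  moreover have "\<bar>d\<bar> \<noteq> 1"
  proof
    assume "\<bar>d\<bar> = 1"
    then have "d mod m \<in> {1, m - 1}" using mod_small_set1[OF assms(1)] by simp
    then show False using assms(2) m by auto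
  qed
  ultimately show ?thesis by simp
qed

lemma mod_adj_cases:
  fixes x y m :: int
  assumes "0 \<le> y" "y < m" "(y - x) mod m \<in> {1, m - 1}"
  shows "y = (x + 1) mod m \<or> y = (x - 1) mod m"
proof -
  have ym: "y mod m = y" using assms by simp
  have "y mod m = ((y - x) mod m + x) mod m" by (simp add: mod_add_left_eq)
  moreover have "((m - 1) + x) mod m = (x - 1) mod m"
  proof -
    have "(m - 1) + x = (x - 1) + 1 * m" by simp
    then show ?thesis by (metis mod_mult_self1)
  qed
  ultimately show ?thesis using assms(3) ym by (auto simp: add.commute)
qed

lemma mod_adj_iff:
  fixes x y m :: int
  assumes "m \<ge> 3"
  shows "((x + 1) mod m - x mod m) mod m \<in> {1, m - 1}" and "((x - 1) mod m - x mod m) mod m \<in> {1, m - 1}"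
proof -
  have "((x + 1) mod m - x mod m) mod m = (x + 1 - x) mod m" by (simp add: mod_diff_eq)
  then show "((x + 1) mod m - x mod m) mod m \<in> {1, m - 1}" using assms by simp
  have "((x - 1) mod m - x mod m) mod m = (x - 1 - x) mod m" by (simp add: mod_diff_eq)
  moreover have "(-1::int) mod m = m - 1" using assms by (simp add: zmod_zminus1_eq_if)
  ultimately show "((x - 1) mod m - x mod m) mod m \<in> {1, m - 1}" by simp
qed

locale models =
  fixes Ps :: "'c list set" and Cs :: "'x list set"
  assumes finP: "finite Ps" and finC: "finite Cs"
    and Pne: "\<forall>p\<in>Ps. p \<noteq> []"
    and C3: "\<forall>c\<in>Cs. 3 \<le> length c"
    and Cbig: "\<forall>c\<in>Cs. JJ length Ps + 1 \<le> int (length c)"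
begin

lemma len_bound: "p \<in> Ps \<Longrightarrow> c \<in> Cs \<Longrightarrow> int (length p) + 1 \<le> int (length c)"
  using JJ_ge[OF finP, of p length] Cbig by fastforce

definition c0 :: "('c list \<times> nat \<Rightarrow> 'x list \<times> int) \<Rightarrow> 'c list \<Rightarrow> 'x list" where
  "c0 f p = fst (f (p, 0))"
definition s0 :: "('c list \<times> nat \<Rightarrow> 'x list \<times> int) \<Rightarrow> 'c list \<Rightarrow> int" where
  "s0 f p = snd (f (p, 0))"
definition dir :: "('c list \<times> nat \<Rightarrow> 'x list \<times> int) \<Rightarrow> 'c list \<Rightarrow> bool" where
  "dir f p \<longleftrightarrow> length p = 1 \<or> snd (f (p, 1)) = (s0 f p + 1) mod int (length (c0 f p))"
definition del :: "('c list \<times> nat \<Rightarrow> 'x list \<times> int) \<Rightarrow> 'c list \<Rightarrow> int" where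
  "del f p = (if dir f p then 1 else -1)"

lemma walk:
  assumes f: "f \<in> EmbS (VLm Ps) adjLm (VGm Cs) adjGm" and p: "p \<in> Ps" and r: "r < length p"
  shows "f (p, r) = (c0 f p, (s0 f p + del f p * int r) mod int (length (c0 f p)))"
proof -
  have fP: "f \<in> VLm Ps \<rightarrow>\<^sub>E VGm Cs" and inj: "inj_on f (VLm Ps)"
    and adj: "\<And>u v. u \<in> VLm Ps \<Longrightarrow> v \<in> VLm Ps \<Longrightarrow> adjLm u v \<longleftrightarrow> adjGm (f u) (f v)"
    using f unfolding EmbS_def by auto
  define m where "m = int (length (c0 f p))"
  define c where "c = c0 f p"
  define x0 where "x0 = s0 f p"
  define d where "d = del f p"
  have inV: "f (p, r) \<in> VGm Cs" if "r < length p" for r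
    using fP p that unfolding VLm_def by (auto simp: PiE_iff)
  have c0C: "c \<in> Cs" using inV[of 0] Pne p unfolding c_def c0_def VGm_def by (cases "f (p, 0)") auto
  have m3: "m \<ge> 3" using C3 c0C unfolding m_def c_def by auto
  have x0r: "0 \<le> x0" "x0 < m" using inV[of 0] Pne p unfolding x0_def s0_def m_def c0_def VGm_def
    by (cases "f (p, 0)"; auto)+
  have step1: "fst (f (p, Suc r)) = fst (f (p, r)) \<and>
      (snd (f (p, Suc r)) = (snd (f (p, r)) + 1) mod m \<or> snd (f (p, Suc r)) = (snd (f (p, r)) - 1) mod m)"
    if "Suc r < length p" "fst (f (p, r)) = c" for r
  proof -
    have "adjLm (p, r) (p, Suc r)" unfolding adjLm_def by simp
    then have A: "adjGm (f (p, r)) (f (p, Suc r))" using adj[of "(p, r)" "(p, Suc r)"] p that unfolding VLm_def by auto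
    then have fe: "fst (f (p, Suc r)) = fst (f (p, r))" unfolding adjGm_def by auto
    have "0 \<le> snd (f (p, Suc r))" "snd (f (p, Suc r)) < m"
      using inV[OF that(1)] fe that(2) unfolding m_def c_def VGm_def by (cases "f (p, Suc r)"; auto)+
    then show ?thesis using mod_adj_cases[of "snd (f (p, Suc r))" m "snd (f (p, r))"] A fe that(2)
      unfolding adjGm_def m_def c_def by auto
  qed
  have d1: "d = 1 \<or> d = -1" unfolding d_def del_def by auto
  have main: "Suc r < length p \<longrightarrow> f (p, r) = (c, (x0 + d * int r) mod m) \<and> f (p, Suc r) = (c, (x0 + d * int (Suc r)) mod m)" for r
  proof (induction r)
    case 0
    show ?case
    proof
      assume len: "Suc 0 < length p"
      have f0: "f (p, 0) = (c, x0)" unfolding c_def x0_def c0_def s0_def by simp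
      have x0m: "x0 mod m = x0" using x0r by simp
      have "fst (f (p, Suc 0)) = c \<and> (snd (f (p, 1)) = (x0 + 1) mod m \<or> snd (f (p, 1)) = (x0 - 1) mod m)"
        using step1[of 0] len f0 by auto
      moreover have "snd (f (p, 1)) = (x0 + 1) mod m \<longleftrightarrow> d = 1"
        using len unfolding d_def del_def dir_def x0_def m_def c_def by auto
      ultimately have "f (p, Suc 0) = (c, (x0 + d * int (Suc 0)) mod m)" using d1
        by (cases "f (p, Suc 0)") auto
      then show "f (p, 0) = (c, (x0 + d * int 0) mod m) \<and> f (p, Suc 0) = (c, (x0 + d * int (Suc 0)) mod m)"
        using f0 x0m by simp
    qed
  next
    case (Suc r)
    show ?case
    proof
      assume len: "Suc (Suc r) < length p"
      then have IH: "f (p, r) = (c, (x0 + d * int r) mod m)" "f (p, Suc r) = (c, (x0 + d * int (Suc r)) mod m)"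
        using Suc.IH by auto
      define y where "y = x0 + d * int (Suc r)"
      have S: "fst (f (p, Suc (Suc r))) = c \<and> (snd (f (p, Suc (Suc r))) = (y mod m + 1) mod m \<or> snd (f (p, Suc (Suc r))) = (y mod m - 1) mod m)"
        using step1[of "Suc r"] len IH unfolding y_def by auto
      have ne: "f (p, Suc (Suc r)) \<noteq> f (p, r)"
        using p len by (intro inj_on_contraD[OF inj]) (auto simp: VLm_def)
      have e1: "(y mod m + 1) mod m = (y + 1) mod m" "(y mod m - 1) mod m = (y - 1) mod m"
        by (simp_all add: mod_simps)
      have bk: "(y - d) mod m = (x0 + d * int r) mod m" and fw: "(y + d) mod m = (x0 + d * int (Suc (Suc r))) mod m"
        unfolding y_def by (simp_all add: algebra_simps)
      have "snd (f (p, Suc (Suc r))) = (y + d) mod m"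
      proof -
        have "snd (f (p, Suc (Suc r))) \<noteq> (y - d) mod m"
          using ne S IH bk by (cases "f (p, Suc (Suc r))") auto
        then show ?thesis using S e1 d1 by auto
      qed
      then show "f (p, Suc r) = (c, (x0 + d * int (Suc r)) mod m) \<and> f (p, Suc (Suc r)) = (c, (x0 + d * int (Suc (Suc r))) mod m)"
        using IH S fw by (cases "f (p, Suc (Suc r))") auto
    qed
  qed
  show ?thesis
  proof (cases r)
    case 0
    have "x0 mod m = x0" using x0r by simp
    then show ?thesis using 0 unfolding c_def x0_def m_def c0_def s0_def by simp
  next
    case (Suc r')
    then show ?thesis using main[of r'] r unfolding c_def x0_def m_def d_def by auto
  qed
qed

lemma Phi_app: "(p, r) \<in> VLm Ps \<Longrightarrow> Phi Ps st e (p, r) = (fst (st p), (snd (st p) + ori e p r) mod int (length (fst (st p))))"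
  unfolding Phi_def by simp

lemma QaS_D:
  assumes "st \<in> QaS length Cs Ps" "p \<in> Ps"
  shows "fst (st p) \<in> Cs" "0 \<le> snd (st p)" "snd (st p) < int (length (fst (st p)))"
proof -
  have "st p \<in> (SIGMA c:Cs. {0..<int (length c)})" using assms unfolding QaS_def by (auto simp: PiE_iff)
  then show "fst (st p) \<in> Cs" "0 \<le> snd (st p)" "snd (st p) < int (length (fst (st p)))" by (cases "st p"; auto)+
qed

lemma sep_use:
  assumes st: "st \<in> QaS length Cs Ps" and pq: "p \<in> Ps" "q \<in> Ps" "p \<noteq> q" "fst (st p) = fst (st q)"
    and r: "r < length p" "r' < length q"
  shows "(snd (st p) + ori e p r - (snd (st q) + ori e' q r')) mod int (length (fst (st p))) \<notin> {0, 1, int (length (fst (st p))) - 1}"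
proof -
  have "sepC (int (length (fst (st p)))) (snd (st p)) (length p) (snd (st q)) (length q)"
    using st pq unfolding QaS_def by auto
  moreover have "nat (ori e p r) < length p" "nat (ori e' q r') < length q"
    using ori_range[OF r(1), of e] ori_range[OF r(2), of e'] by auto
  moreover have "int (nat (ori e p r)) = ori e p r" "int (nat (ori e' q r')) = ori e' q r'"
    using ori_range[OF r(1), of e] ori_range[OF r(2), of e'] by auto
  ultimately show ?thesis unfolding sepC_def by metis
qed

lemma Phi_in:
  assumes st: "st \<in> QaS length Cs Ps" and e: "e \<in> OrS Ps"
  shows "Phi Ps st e \<in> EmbS (VLm Ps) adjLm (VGm Cs) adjGm"
proof -
  define f where "f = Phi Ps st e"
  have val: "f (p, r) = (fst (st p), (snd (st p) + ori e p r) mod int (length (fst (st p))))"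
    if "(p, r) \<in> VLm Ps" for p r using Phi_app[OF that] unfolding f_def .
  have mpos: "int (length (fst (st p))) \<ge> 3" if "p \<in> Ps" for p using C3 QaS_D(1)[OF st that] by auto
  have lenb: "int (length p) + 1 \<le> int (length (fst (st p)))" if "p \<in> Ps" for p
    using len_bound[OF that QaS_D(1)[OF st that]] .
  have "f \<in> VLm Ps \<rightarrow>\<^sub>E VGm Cs"
  proof -
    have "f u \<in> VGm Cs" if "u \<in> VLm Ps" for u
    proof -
      obtain p r where u: "u = (p, r)" by (cases u)
      have p: "p \<in> Ps" using that u unfolding VLm_def by auto
      have mp: "int (length (fst (st p))) > 0" using mpos[OF p] by linarith
      show ?thesis using val[of p r] that u QaS_D(1)[OF st p] pos_mod_sign[OF mp] pos_mod_bound[OF mp] unfolding VGm_def by auto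
    qed
    moreover have "f \<in> extensional (VLm Ps)" unfolding f_def Phi_def by simp
    ultimately show ?thesis by (auto simp: PiE_iff)
  qed
  moreover have "inj_on f (VLm Ps)"
  proof (rule inj_onI)
    fix u v assume u: "u \<in> VLm Ps" and v: "v \<in> VLm Ps" and eq: "f u = f v"
    obtain p r where pr: "u = (p, r)" by (cases u)
    obtain q r' where qr: "v = (q, r')" by (cases v)
    have p: "p \<in> Ps" "r < length p" using u pr unfolding VLm_def by auto
    have q: "q \<in> Ps" "r' < length q" using v qr unfolding VLm_def by auto
    define m where "m = int (length (fst (st p)))"
    have fsteq: "fst (st p) = fst (st q)" using eq val[of p r] val[of q r'] u v pr qr by simp
    have modeq: "(snd (st p) + ori e p r) mod m = (snd (st q) + ori e q r') mod m"
      using eq val[of p r] val[of q r'] u v pr qr fsteq unfolding m_def by simp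
    then have z: "(snd (st p) + ori e p r - (snd (st q) + ori e q r')) mod m = 0" by (rule mod_diff_zero)
    show "u = v"
    proof (cases "p = q")
      case True
      have "(ori e p r - ori e p r') mod m = 0" using z True by (simp add: algebra_simps)
      moreover have "\<bar>ori e p r - ori e p r'\<bar> \<le> m - 2"
        using ori_range[OF p(2), of e] ori_range[of r' p e] q True lenb[OF p(1)] unfolding m_def by auto
      ultimately have "ori e p r = ori e p r'" using mod_small_zero by force
      then have "r = r'" using ori_inj[OF p(2)] q True by auto
      then show ?thesis using pr qr True by simp
    next
      case False
      then show ?thesis using sep_use[OF st p(1) q(1) False fsteq p(2) q(2), of e e] z unfolding m_def by simp
    qed
  qed
  moreover have "adjLm u v \<longleftrightarrow> adjGm (f u) (f v)" if u: "u \<in> VLm Ps" and v: "v \<in> VLm Ps" for u v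
  proof -
    obtain p r where pr: "u = (p, r)" by (cases u)
    obtain q r' where qr: "v = (q, r')" by (cases v)
    have p: "p \<in> Ps" "r < length p" using u pr unfolding VLm_def by auto
    have q: "q \<in> Ps" "r' < length q" using v qr unfolding VLm_def by auto
    define m where "m = int (length (fst (st p)))"
    have m3: "m \<ge> 3" using mpos[OF p(1)] unfolding m_def .
    have dd: "((snd (st q) + ori e q r') mod m - (snd (st p) + ori e p r) mod m) mod m
        = (- (snd (st p) + ori e p r - (snd (st q) + ori e q r'))) mod m"
      by (simp add: mod_diff_eq)
    show ?thesis
    proof (cases "p = q")
      case True
      have "adjGm (f u) (f v) \<longleftrightarrow> (ori e p r' - ori e p r) mod m \<in> {1, m - 1}"
        using val[of p r] val[of q r'] u v pr qr True dd unfolding adjGm_def m_def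
        by (simp add: mod_diff_eq algebra_simps)
      also have "\<dots> \<longleftrightarrow> \<bar>ori e p r' - ori e p r\<bar> = 1"
      proof (rule mod_small_set1)
        show "\<bar>ori e p r' - ori e p r\<bar> \<le> m - 2"
          using ori_range[OF p(2), of e] ori_range[of r' p e] q True lenb[OF p(1)] unfolding m_def by auto
      qed
      also have "\<dots> \<longleftrightarrow> adjLm u v" using ori_diff[of e p r' r] pr qr True unfolding adjLm_def by auto
      finally show ?thesis by simp
    next
      case False
      have nl: "\<not> adjLm u v" using False pr qr unfolding adjLm_def by simp
      have "\<not> adjGm (f u) (f v)"
      proof
        assume A: "adjGm (f u) (f v)"
        then have fsteq: "fst (st p) = fst (st q)" using val[of p r] val[of q r'] u v pr qr unfolding adjGm_def by simp
        define D where "D = snd (st p) + ori e p r - (snd (st q) + ori e q r')"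
        have "(- D) mod m \<in> {1, m - 1}"
          using A val[of p r] val[of q r'] u v pr qr fsteq dd unfolding adjGm_def m_def D_def by simp
        moreover have "(- D) mod m \<in> {1, m - 1} \<longleftrightarrow> D mod m \<in> {1, m - 1}"
          using mod_neg_set(2)[of m D] m3 by linarith
        ultimately have "(snd (st p) + ori e p r - (snd (st q) + ori e q r')) mod m \<in> {1, m - 1}"
          unfolding D_def by blast
        then show False using sep_use[OF st p(1) q(1) False fsteq p(2) q(2), of e e] unfolding m_def by auto
      qed
      then show ?thesis using nl by simp
    qed
  qed
  ultimately show ?thesis unfolding EmbS_def f_def by auto
qed

definition Psi :: "('c list \<times> nat \<Rightarrow> 'x list \<times> int) \<Rightarrow> ('c list \<Rightarrow> 'x list \<times> int) \<times> ('c list \<Rightarrow> bool)" where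
  "Psi f = (restrict (\<lambda>p. (c0 f p, if dir f p then s0 f p else (s0 f p - (int (length p) - 1)) mod int (length (c0 f p)))) Ps,
            restrict (dir f) Ps)"

lemma Emb_facts:
  assumes f: "f \<in> EmbS (VLm Ps) adjLm (VGm Cs) adjGm" and p: "p \<in> Ps"
  shows "c0 f p \<in> Cs" "0 \<le> s0 f p" "s0 f p < int (length (c0 f p))"
proof -
  have "f (p, 0) \<in> VGm Cs" using f p Pne unfolding EmbS_def VLm_def by (auto simp: PiE_iff)
  then show "c0 f p \<in> Cs" "0 \<le> s0 f p" "s0 f p < int (length (c0 f p))"
    unfolding c0_def s0_def VGm_def by (cases "f (p, 0)"; auto)+
qed

lemma Phi_Psi:
  assumes f: "f \<in> EmbS (VLm Ps) adjLm (VGm Cs) adjGm"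
  shows "Phi Ps (fst (Psi f)) (snd (Psi f)) = f"
proof -
  have fP: "f \<in> VLm Ps \<rightarrow>\<^sub>E VGm Cs" using f unfolding EmbS_def by auto
  show ?thesis unfolding Phi_def
  proof (rule restrict_eq_PiE[OF fP])
    fix u assume u: "u \<in> VLm Ps"
    obtain p r where pr: "u = (p, r)" by (cases u)
    have p: "p \<in> Ps" "r < length p" using u pr unfolding VLm_def by auto
    define m where "m = int (length (c0 f p))"
    have W: "f (p, r) = (c0 f p, (s0 f p + del f p * int r) mod m)" using walk[OF f p] unfolding m_def .
    have "(\<lambda>(p, r). (fst (fst (Psi f) p), (snd (fst (Psi f) p) + ori (snd (Psi f)) p r) mod int (length (fst (fst (Psi f) p))))) u
        = (c0 f p, ((if dir f p then s0 f p else (s0 f p - (int (length p) - 1)) mod m) + ori (dir f) p r) mod m)"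
      using p pr unfolding Psi_def m_def ori_def by simp
    also have "\<dots> = f u"
    proof (cases "dir f p")
      case True then show ?thesis using W pr unfolding ori_def del_def by simp
    next
      case False
      have "((s0 f p - (int (length p) - 1)) mod m + (int (length p) - 1 - int r)) mod m = (s0 f p - int r) mod m"
        by (simp add: mod_add_left_eq)
      then show ?thesis using W pr False unfolding ori_def del_def by simp
    qed
    finally show "(\<lambda>(p, r). (fst (fst (Psi f) p), (snd (fst (Psi f) p) + ori (snd (Psi f)) p r) mod int (length (fst (fst (Psi f) p))))) u = f u" .
  qed
qed

lemma Psi_in:
  assumes f: "f \<in> EmbS (VLm Ps) adjLm (VGm Cs) adjGm"
  shows "Psi f \<in> QaS length Cs Ps \<times> OrS Ps"
proof -
  define st where "st = fst (Psi f)"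
  define e where "e = snd (Psi f)"
  have inj: "inj_on f (VLm Ps)" and adj: "\<And>u v. u \<in> VLm Ps \<Longrightarrow> v \<in> VLm Ps \<Longrightarrow> adjLm u v \<longleftrightarrow> adjGm (f u) (f v)"
    using f unfolding EmbS_def by auto
  have PP: "Phi Ps st e = f" using Phi_Psi[OF f] unfolding st_def e_def .
  have stp: "st p = (c0 f p, if dir f p then s0 f p else (s0 f p - (int (length p) - 1)) mod int (length (c0 f p)))"
    if "p \<in> Ps" for p using that unfolding st_def Psi_def by simp
  have ep: "e p = dir f p" if "p \<in> Ps" for p using that unfolding e_def Psi_def by simp
  have stin: "st \<in> Ps \<rightarrow>\<^sub>E (SIGMA c:Cs. {0..<int (length c)})"
  proof -
    have "st p \<in> (SIGMA c:Cs. {0..<int (length c)})" if p: "p \<in> Ps" for p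
    proof -
      have m0: "int (length (c0 f p)) > 0" using C3 Emb_facts(1)[OF f p] by force
      show ?thesis using stp[OF p] Emb_facts[OF f p] pos_mod_sign[OF m0] pos_mod_bound[OF m0] by auto
    qed
    moreover have "st \<in> extensional Ps" unfolding st_def Psi_def by simp
    ultimately show ?thesis by (auto simp: PiE_iff)
  qed
  have sep: "sepC (int (length (fst (st p)))) (snd (st p)) (length p) (snd (st q)) (length q)"
    if pq: "p \<in> Ps" "q \<in> Ps" "p \<noteq> q" "fst (st p) = fst (st q)" for p q
  proof -
    define m where "m = int (length (fst (st p)))"
    have m3: "m \<ge> 3" using C3 Emb_facts(1)[OF f pq(1)] stp[OF pq(1)] unfolding m_def by auto
    have sr: "0 \<le> snd (st p)" "0 \<le> snd (st q)" using stin pq by (auto simp: PiE_iff)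
    show ?thesis unfolding sepC_def m_def[symmetric]
    proof (intro allI impI)
      fix t t' assume tt: "t < length p" "t' < length q"
      obtain r where r: "r < length p" "ori e p r = int t" using ori_surj[of "int t" p e] tt by auto
      obtain r' where r': "r' < length q" "ori e q r' = int t'" using ori_surj[of "int t'" q e] tt by auto
      have u: "(p, r) \<in> VLm Ps" and v: "(q, r') \<in> VLm Ps" using r r' pq unfolding VLm_def by auto
      have fu: "f (p, r) = (fst (st p), (snd (st p) + int t) mod m)"
        using Phi_app[OF u, of st e] PP r unfolding m_def by simp
      have fv: "f (q, r') = (fst (st p), (snd (st q) + int t') mod m)"
        using Phi_app[OF v, of st e] PP r' pq(4) unfolding m_def by simp
      define D where "D = snd (st p) + int t - (snd (st q) + int t')"
      have ne: "f (p, r) \<noteq> f (q, r')" using inj_on_contraD[OF inj _ u v] pq(3) by auto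
      have "D mod m \<noteq> 0"
      proof
        assume "D mod m = 0"
        then have "(snd (st p) + int t) mod m = (snd (st q) + int t') mod m"
          unfolding D_def by (simp add: mod_eq_dvd_iff dvd_eq_mod_eq_0)
        then show False using ne fu fv by simp
      qed
      moreover have "D mod m \<notin> {1, m - 1}"
      proof
        assume A: "D mod m \<in> {1, m - 1}"
        have "(- D) mod m \<in> {1, m - 1} \<longleftrightarrow> D mod m \<in> {1, m - 1}"
          using mod_neg_set(2)[of m D] m3 by linarith
        then have "(- D) mod m \<in> {1, m - 1}" using A by simp
        moreover have "((snd (st q) + int t') mod m - (snd (st p) + int t) mod m) mod m = (- D) mod m"
          unfolding D_def by (simp add: mod_diff_eq)
        ultimately have "adjGm (f (p, r)) (f (q, r'))" using fu fv unfolding adjGm_def m_def by simp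
        then have "adjLm (p, r) (q, r')" using adj[OF u v] by simp
        then show False using pq(3) unfolding adjLm_def by simp
      qed
      ultimately show "(snd (st p) + int t - (snd (st q) + int t')) mod m \<notin> {0, 1, m - 1}"
        unfolding D_def by auto
    qed
  qed
  have "st \<in> QaS length Cs Ps" unfolding QaS_def using stin sep by auto
  moreover have "e \<in> OrS Ps" unfolding OrS_def e_def Psi_def dir_def by auto
  ultimately show ?thesis unfolding st_def e_def by (cases "Psi f") auto
qed

lemma Psi_Phi:
  assumes st: "st \<in> QaS length Cs Ps" and e: "e \<in> OrS Ps"
  shows "Psi (Phi Ps st e) = (st, e)"
proof -
  define f where "f = Phi Ps st e"
  have eP: "e \<in> Ps \<rightarrow>\<^sub>E UNIV" and e1: "\<forall>p\<in>Ps. length p = 1 \<longrightarrow> e p" using e unfolding OrS_def by auto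
  have stP: "st \<in> Ps \<rightarrow>\<^sub>E (SIGMA c:Cs. {0..<int (length c)})" using st unfolding QaS_def by auto
  have key: "c0 f p = fst (st p) \<and> dir f p = e p \<and>
     (if dir f p then s0 f p else (s0 f p - (int (length p) - 1)) mod int (length (c0 f p))) = snd (st p)"
    if p: "p \<in> Ps" for p
  proof -
    define m where "m = int (length (fst (st p)))"
    define sp where "sp = snd (st p)"
    define L where "L = int (length p)"
    have m3: "m \<ge> 3" using C3 QaS_D(1)[OF st p] unfolding m_def by auto
    have spr: "0 \<le> sp" "sp < m" using QaS_D[OF st p] unfolding sp_def m_def by auto
    have Lm: "L + 1 \<le> m" using len_bound[OF p QaS_D(1)[OF st p]] unfolding L_def m_def .
    have u0: "(p, 0) \<in> VLm Ps" using p Pne unfolding VLm_def by auto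
    have f0: "f (p, 0) = (fst (st p), (sp + ori e p 0) mod m)" using Phi_app[OF u0, of st e] unfolding f_def sp_def m_def by simp
    have c0e: "c0 f p = fst (st p)" using f0 unfolding c0_def by simp
    have s0e: "s0 f p = (sp + ori e p 0) mod m" using f0 unfolding s0_def by simp
    have dir_e: "dir f p = e p"
    proof (cases "length p = 1")
      case True then show ?thesis using e1 p unfolding dir_def by simp
    next
      case False
      then have l2: "1 < length p" using Pne p by (cases p) auto
      have u1: "(p, 1) \<in> VLm Ps" using p l2 unfolding VLm_def by auto
      have f1: "snd (f (p, 1)) = (sp + ori e p 1) mod m" using Phi_app[OF u1, of st e] unfolding f_def sp_def m_def by simp
      show ?thesis
      proof (cases "e p")
        case True
        then have "snd (f (p, 1)) = (s0 f p + 1) mod m" using f1 s0e unfolding ori_def by (simp add: mod_simps)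
        then show ?thesis using True False c0e unfolding dir_def m_def by simp
      next
        case eF: False
        have "(sp + L - 2) mod m \<noteq> (sp + L) mod m"
        proof
          assume "(sp + L - 2) mod m = (sp + L) mod m"
          then have "(sp + L - 2 - (sp + L)) mod m = 0" by (rule mod_diff_zero)
          then have "(- 2) mod m = 0" by simp
          moreover have "(- 2) mod m = m - 2" using m3 by (simp add: zmod_zminus1_eq_if)
          ultimately show False using m3 by simp
        qed
        moreover have "snd (f (p, 1)) = (sp + L - 2) mod m" using f1 eF unfolding ori_def L_def by (simp add: algebra_simps)
        moreover have "(s0 f p + 1) mod m = (sp + L) mod m" using s0e eF unfolding ori_def L_def by (simp add: mod_simps algebra_simps)
        ultimately show ?thesis using eF False c0e unfolding dir_def m_def by simp
      qed
    qed
    have "(if dir f p then s0 f p else (s0 f p - (L - 1)) mod m) = sp"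
    proof (cases "e p")
      case True then show ?thesis using dir_e s0e spr unfolding ori_def by simp
    next
      case False
      have "((sp + (L - 1 - 0)) mod m - (L - 1)) mod m = sp mod m" by (simp add: mod_diff_left_eq)
      then show ?thesis using dir_e s0e spr False unfolding ori_def L_def by simp
    qed
    then show ?thesis using c0e dir_e unfolding m_def L_def sp_def by (cases "e p") auto
  qed
  have "fst (Psi f) = st" unfolding Psi_def fst_conv
  proof (rule restrict_eq_PiE[OF stP])
    fix p assume "p \<in> Ps"
    then show "(c0 f p, if dir f p then s0 f p else (s0 f p - (int (length p) - 1)) mod int (length (c0 f p))) = st p"
      using key[of p] by (cases "e p") (auto simp: prod_eq_iff)
  qed
  moreover have "snd (Psi f) = e" unfolding Psi_def using key by (auto intro!: restrict_eq_PiE[OF eP])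
  ultimately show ?thesis unfolding f_def by (cases "Psi (Phi Ps st e)") auto
qed

theorem card_emb: "card (EmbS (VLm Ps) adjLm (VGm Cs) adjGm) = card (QaS length Cs Ps) * card (OrS Ps)"
proof -
  have "bij_betw (\<lambda>(st, e). Phi Ps st e) (QaS length Cs Ps \<times> OrS Ps) (EmbS (VLm Ps) adjLm (VGm Cs) adjGm)"
  proof (rule bij_betw_byWitness[where f'=Psi])
    show "\<forall>a\<in>QaS length Cs Ps \<times> OrS Ps. Psi ((\<lambda>(st, e). Phi Ps st e) a) = a"
      using Psi_Phi by auto
    show "\<forall>a'\<in>EmbS (VLm Ps) adjLm (VGm Cs) adjGm. (\<lambda>(st, e). Phi Ps st e) (Psi a') = a'"
      using Phi_Psi by (simp add: case_prod_beta)
    show "(\<lambda>(st, e). Phi Ps st e) ` (QaS length Cs Ps \<times> OrS Ps) \<subseteq> EmbS (VLm Ps) adjLm (VGm Cs) adjGm"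
      using Phi_in by auto
    show "Psi ` EmbS (VLm Ps) adjLm (VGm Cs) adjGm \<subseteq> QaS length Cs Ps \<times> OrS Ps"
      using Psi_in by blast
  qed
  then show ?thesis by (metis bij_betw_same_card card_cartesian_product)
qed

end

lemma EmbS_iso:
  assumes a: "bij_betw \<alpha> VL2 VL" and aadj: "\<forall>u\<in>VL2. \<forall>v\<in>VL2. adjL2 u v \<longleftrightarrow> adjL (\<alpha> u) (\<alpha> v)"
    and b: "bij_betw \<beta> V2 V" and badj: "\<forall>x\<in>V2. \<forall>y\<in>V2. adj2 x y \<longleftrightarrow> adj (\<beta> x) (\<beta> y)"
  shows "card (EmbS VL adjL V adj) = card (EmbS VL2 adjL2 V2 adj2)"
proof -
  define \<alpha>' where "\<alpha>' = inv_into VL2 \<alpha>"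
  define \<beta>' where "\<beta>' = inv_into V2 \<beta>"
  have a': "bij_betw \<alpha>' VL VL2" unfolding \<alpha>'_def by (rule bij_betw_inv_into[OF a])
  have b': "bij_betw \<beta>' V V2" unfolding \<beta>'_def by (rule bij_betw_inv_into[OF b])
  have aa: "\<alpha>' (\<alpha> u) = u" if "u \<in> VL2" for u unfolding \<alpha>'_def using a that by (simp add: bij_betw_inv_into_left)
  have aa': "\<alpha> (\<alpha>' u) = u" if "u \<in> VL" for u unfolding \<alpha>'_def using a that by (simp add: bij_betw_inv_into_right)
  have bb: "\<beta>' (\<beta> u) = u" if "u \<in> V2" for u unfolding \<beta>'_def using b that by (simp add: bij_betw_inv_into_left)
  have bb': "\<beta> (\<beta>' u) = u" if "u \<in> V" for u unfolding \<beta>'_def using b that by (simp add: bij_betw_inv_into_right)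
  have aM: "\<alpha> u \<in> VL" if "u \<in> VL2" for u using a that by (auto simp: bij_betw_def)
  have aM': "\<alpha>' u \<in> VL2" if "u \<in> VL" for u using a' that by (auto simp: bij_betw_def)
  have bM: "\<beta> u \<in> V" if "u \<in> V2" for u using b that by (auto simp: bij_betw_def)
  have bM': "\<beta>' u \<in> V2" if "u \<in> V" for u using b' that by (auto simp: bij_betw_def)
  have "bij_betw (\<lambda>f. restrict (\<lambda>u. \<beta>' (f (\<alpha> u))) VL2) (EmbS VL adjL V adj) (EmbS VL2 adjL2 V2 adj2)"
  proof (rule bij_betw_byWitness[where f'="\<lambda>g. restrict (\<lambda>u. \<beta> (g (\<alpha>' u))) VL"])
    show "\<forall>f\<in>EmbS VL adjL V adj. restrict (\<lambda>u. \<beta> (restrict (\<lambda>u. \<beta>' (f (\<alpha> u))) VL2 (\<alpha>' u))) VL = f"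
    proof
      fix f assume f: "f \<in> EmbS VL adjL V adj"
      then have fP: "f \<in> VL \<rightarrow>\<^sub>E V" unfolding EmbS_def by auto
      show "restrict (\<lambda>u. \<beta> (restrict (\<lambda>u. \<beta>' (f (\<alpha> u))) VL2 (\<alpha>' u))) VL = f"
        by (rule restrict_eq_PiE[OF fP]) (use fP aM' aa' bb' in \<open>auto simp: PiE_iff\<close>)
    qed
    show "\<forall>g\<in>EmbS VL2 adjL2 V2 adj2. restrict (\<lambda>u. \<beta>' (restrict (\<lambda>u. \<beta> (g (\<alpha>' u))) VL (\<alpha> u))) VL2 = g"
    proof
      fix g assume g: "g \<in> EmbS VL2 adjL2 V2 adj2"
      then have gP: "g \<in> VL2 \<rightarrow>\<^sub>E V2" unfolding EmbS_def by auto
      show "restrict (\<lambda>u. \<beta>' (restrict (\<lambda>u. \<beta> (g (\<alpha>' u))) VL (\<alpha> u))) VL2 = g"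
        by (rule restrict_eq_PiE[OF gP]) (use gP aM aa bb in \<open>auto simp: PiE_iff\<close>)
    qed
    show "(\<lambda>f. restrict (\<lambda>u. \<beta>' (f (\<alpha> u))) VL2) ` EmbS VL adjL V adj \<subseteq> EmbS VL2 adjL2 V2 adj2"
    proof
      fix x assume "x \<in> (\<lambda>f. restrict (\<lambda>u. \<beta>' (f (\<alpha> u))) VL2) ` EmbS VL adjL V adj"
      then obtain f where f: "f \<in> EmbS VL adjL V adj" and x: "x = restrict (\<lambda>u. \<beta>' (f (\<alpha> u))) VL2" by auto
      have fP: "f \<in> VL \<rightarrow>\<^sub>E V" and inj: "inj_on f VL" and fa: "\<And>u v. u \<in> VL \<Longrightarrow> v \<in> VL \<Longrightarrow> adjL u v \<longleftrightarrow> adj (f u) (f v)"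
        using f unfolding EmbS_def by auto
      have fM: "f u \<in> V" if "u \<in> VL" for u using fP that by auto
      have "x \<in> VL2 \<rightarrow>\<^sub>E V2" unfolding x using fM aM bM' by auto
      moreover have "inj_on x VL2"
      proof (rule inj_onI)
        fix u v assume uv: "u \<in> VL2" "v \<in> VL2" "x u = x v"
        then have "\<beta>' (f (\<alpha> u)) = \<beta>' (f (\<alpha> v))" unfolding x by simp
        then have "f (\<alpha> u) = f (\<alpha> v)" using bb' fM aM uv by metis
        then have "\<alpha> u = \<alpha> v" using inj aM uv by (meson inj_onD)
        then show "u = v" using aa uv by metis
      qed
      moreover have "adjL2 u v \<longleftrightarrow> adj2 (x u) (x v)" if "u \<in> VL2" "v \<in> VL2" for u v
      proof -
        have "adjL2 u v \<longleftrightarrow> adjL (\<alpha> u) (\<alpha> v)" using aadj that by auto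
        also have "\<dots> \<longleftrightarrow> adj (f (\<alpha> u)) (f (\<alpha> v))" using fa aM that by auto
        also have "\<dots> \<longleftrightarrow> adj2 (\<beta>' (f (\<alpha> u))) (\<beta>' (f (\<alpha> v)))" using badj bM' bb' fM aM that by metis
        finally show ?thesis unfolding x using that by simp
      qed
      ultimately show "x \<in> EmbS VL2 adjL2 V2 adj2" unfolding EmbS_def by auto
    qed
    show "(\<lambda>g. restrict (\<lambda>u. \<beta> (g (\<alpha>' u))) VL) ` EmbS VL2 adjL2 V2 adj2 \<subseteq> EmbS VL adjL V adj"
    proof
      fix x assume "x \<in> (\<lambda>g. restrict (\<lambda>u. \<beta> (g (\<alpha>' u))) VL) ` EmbS VL2 adjL2 V2 adj2"
      then obtain g where g: "g \<in> EmbS VL2 adjL2 V2 adj2" and x: "x = restrict (\<lambda>u. \<beta> (g (\<alpha>' u))) VL" by auto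
      have gP: "g \<in> VL2 \<rightarrow>\<^sub>E V2" and inj: "inj_on g VL2" and ga: "\<And>u v. u \<in> VL2 \<Longrightarrow> v \<in> VL2 \<Longrightarrow> adjL2 u v \<longleftrightarrow> adj2 (g u) (g v)"
        using g unfolding EmbS_def by auto
      have gM: "g u \<in> V2" if "u \<in> VL2" for u using gP that by auto
      have "x \<in> VL \<rightarrow>\<^sub>E V" unfolding x using gM aM' bM by auto
      moreover have "inj_on x VL"
      proof (rule inj_onI)
        fix u v assume uv: "u \<in> VL" "v \<in> VL" "x u = x v"
        then have "\<beta> (g (\<alpha>' u)) = \<beta> (g (\<alpha>' v))" unfolding x by simp
        then have "g (\<alpha>' u) = g (\<alpha>' v)" using bb gM aM' uv by metis
        then have "\<alpha>' u = \<alpha>' v" using inj aM' uv by (meson inj_onD)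
        then show "u = v" using aa' uv by metis
      qed
      moreover have "adjL u v \<longleftrightarrow> adj (x u) (x v)" if "u \<in> VL" "v \<in> VL" for u v
      proof -
        have "adjL u v \<longleftrightarrow> adjL2 (\<alpha>' u) (\<alpha>' v)" using aadj aM' aa' that by metis
        also have "\<dots> \<longleftrightarrow> adj2 (g (\<alpha>' u)) (g (\<alpha>' v))" using ga aM' that by auto
        also have "\<dots> \<longleftrightarrow> adj (\<beta> (g (\<alpha>' u))) (\<beta> (g (\<alpha>' v)))" using badj gM aM' that by auto
        finally show ?thesis unfolding x using that by simp
      qed
      ultimately show "x \<in> EmbS VL adjL V adj" unfolding EmbS_def by auto
    qed
  qed
  then show ?thesis by (rule bij_betw_same_card)
qed

lemma count_aut:
  assumes finV: "finite V" and finL: "finite VL"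
  shows "induced_count V E VL EL * card (EmbS VL (\<lambda>u v. {u, v} \<in> EL) VL (\<lambda>u v. {u, v} \<in> EL))
       = card (EmbS VL (\<lambda>u v. {u, v} \<in> EL) V (\<lambda>x y. {x, y} \<in> E))"
proof -
  define adjL where "adjL = (\<lambda>u v. {u, v} \<in> EL)"
  define adj where "adj = (\<lambda>x y. {x, y} \<in> E)"
  define Em where "Em = EmbS VL adjL V adj"
  define Aut where "Aut = EmbS VL adjL VL adjL"
  define Good where "Good = {X. X \<subseteq> V \<and> graph_iso X (induced_edges E X) VL EL}"
  define Iso where "Iso X = {f\<in>Em. f ` VL = X}" for X
  have indE: "{x, y} \<in> induced_edges E X \<longleftrightarrow> {x, y} \<in> E" if "x \<in> X" "y \<in> X" for X x y
    using that unfolding induced_edges_def by auto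
  have finGood: "finite Good"
  proof (rule finite_subset)
    show "Good \<subseteq> Pow V" unfolding Good_def by auto
  qed (use finV in simp)
  have finEm: "finite Em" unfolding Em_def EmbS_def using finV finL
    by (intro finite_subset[OF _ finite_PiE[OF finL, of "\<lambda>_. V"]]) auto
  have img_good: "f ` VL \<in> Good" if f: "f \<in> Em" for f
  proof -
    have fP: "f \<in> VL \<rightarrow>\<^sub>E V" and inj: "inj_on f VL" and fa: "\<And>u v. u \<in> VL \<Longrightarrow> v \<in> VL \<Longrightarrow> adjL u v \<longleftrightarrow> adj (f u) (f v)"
      using f unfolding Em_def EmbS_def by auto
    define \<phi> where "\<phi> = inv_into VL f"
    have bf: "bij_betw f VL (f ` VL)" using inj by (simp add: bij_betw_imageI)
    have "bij_betw \<phi> (f ` VL) VL" unfolding \<phi>_def by (rule bij_betw_inv_into[OF bf])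
    moreover have "{x, y} \<in> induced_edges E (f ` VL) \<longleftrightarrow> {\<phi> x, \<phi> y} \<in> EL" if xy: "x \<in> f ` VL" "y \<in> f ` VL" for x y
    proof -
      obtain u v where uv: "u \<in> VL" "v \<in> VL" "x = f u" "y = f v" using xy by auto
      have "\<phi> x = u" "\<phi> y = v" unfolding \<phi>_def uv using inj uv by auto
      then show ?thesis using indE[OF xy] fa[OF uv(1,2)] uv unfolding adjL_def adj_def by simp
    qed
    ultimately have "graph_iso (f ` VL) (induced_edges E (f ` VL)) VL EL" unfolding graph_iso_def by blast
    moreover have "f ` VL \<subseteq> V" using fP by auto
    ultimately show ?thesis unfolding Good_def by auto
  qed
  have cover: "Em = (\<Union>X\<in>Good. Iso X)" unfolding Iso_def using img_good by auto
  have cardIso: "card (Iso X) = card Aut" if X: "X \<in> Good" for X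
  proof -
    from X obtain \<phi> where bphi: "bij_betw \<phi> X VL" and phie: "\<forall>u\<in>X. \<forall>v\<in>X. {u, v} \<in> induced_edges E X \<longleftrightarrow> {\<phi> u, \<phi> v} \<in> EL"
      and XV: "X \<subseteq> V" unfolding Good_def graph_iso_def by auto
    define \<psi> where "\<psi> = inv_into X \<phi>"
    have bpsi: "bij_betw \<psi> VL X" unfolding \<psi>_def by (rule bij_betw_inv_into[OF bphi])
    have pp: "\<psi> (\<phi> x) = x" if "x \<in> X" for x unfolding \<psi>_def using bphi that by (simp add: bij_betw_inv_into_left)
    have pp': "\<phi> (\<psi> x) = x" if "x \<in> VL" for x unfolding \<psi>_def using bphi that by (simp add: bij_betw_inv_into_right)
    have phiM: "\<phi> x \<in> VL" if "x \<in> X" for x using bphi that by (auto simp: bij_betw_def)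
    have psiM: "\<psi> x \<in> X" if "x \<in> VL" for x using bpsi that by (auto simp: bij_betw_def)
    have key: "adj x y \<longleftrightarrow> adjL (\<phi> x) (\<phi> y)" if "x \<in> X" "y \<in> X" for x y
      using phie indE that unfolding adj_def adjL_def by auto
    have "bij_betw (\<lambda>h. restrict (\<lambda>u. \<psi> (h u)) VL) Aut (Iso X)"
    proof (rule bij_betw_byWitness[where f'="\<lambda>f. restrict (\<lambda>u. \<phi> (f u)) VL"])
      show "\<forall>h\<in>Aut. restrict (\<lambda>u. \<phi> (restrict (\<lambda>u. \<psi> (h u)) VL u)) VL = h"
      proof
        fix h assume "h \<in> Aut"
        then have hP: "h \<in> VL \<rightarrow>\<^sub>E VL" unfolding Aut_def EmbS_def by auto
        show "restrict (\<lambda>u. \<phi> (restrict (\<lambda>u. \<psi> (h u)) VL u)) VL = h"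
          by (rule restrict_eq_PiE[OF hP]) (use hP pp' in auto)
      qed
      show "\<forall>f\<in>Iso X. restrict (\<lambda>u. \<psi> (restrict (\<lambda>u. \<phi> (f u)) VL u)) VL = f"
      proof
        fix f assume f: "f \<in> Iso X"
        then have fP: "f \<in> VL \<rightarrow>\<^sub>E V" and fX: "f ` VL = X" unfolding Iso_def Em_def EmbS_def by auto
        show "restrict (\<lambda>u. \<psi> (restrict (\<lambda>u. \<phi> (f u)) VL u)) VL = f"
          by (rule restrict_eq_PiE[OF fP]) (use fX pp in auto)
      qed
      show "(\<lambda>h. restrict (\<lambda>u. \<psi> (h u)) VL) ` Aut \<subseteq> Iso X"
      proof
        fix x assume "x \<in> (\<lambda>h. restrict (\<lambda>u. \<psi> (h u)) VL) ` Aut"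
        then obtain h where h: "h \<in> Aut" and x: "x = restrict (\<lambda>u. \<psi> (h u)) VL" by auto
        have hP: "h \<in> VL \<rightarrow>\<^sub>E VL" and inj: "inj_on h VL" and ha: "\<And>u v. u \<in> VL \<Longrightarrow> v \<in> VL \<Longrightarrow> adjL u v \<longleftrightarrow> adjL (h u) (h v)"
          using h unfolding Aut_def EmbS_def by auto
        have hM: "h u \<in> VL" if "u \<in> VL" for u using hP that by auto
        have hsurj: "h ` VL = VL" using inj hM finL by (meson endo_inj_surj image_subsetI)
        have "x \<in> VL \<rightarrow>\<^sub>E V" unfolding x using hM psiM XV by auto
        moreover have "inj_on x VL"
        proof (rule inj_onI)
          fix u v assume uv: "u \<in> VL" "v \<in> VL" "x u = x v"
          then have "\<psi> (h u) = \<psi> (h v)" unfolding x by simp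
          then have "h u = h v" using pp' hM uv by metis
          then show "u = v" using inj uv by (meson inj_onD)
        qed
        moreover have "adjL u v \<longleftrightarrow> adj (x u) (x v)" if "u \<in> VL" "v \<in> VL" for u v
          using ha[OF that] key[OF psiM[OF hM[OF that(1)]] psiM[OF hM[OF that(2)]]] pp' hM that unfolding x by simp
        moreover have "x ` VL = X"
        proof -
          have "x ` VL = \<psi> ` (h ` VL)" unfolding x by auto
          also have "\<dots> = X" using hsurj bpsi by (simp add: bij_betw_def)
          finally show ?thesis .
        qed
        ultimately show "x \<in> Iso X" unfolding Iso_def Em_def EmbS_def by auto
      qed
      show "(\<lambda>f. restrict (\<lambda>u. \<phi> (f u)) VL) ` Iso X \<subseteq> Aut"
      proof
        fix x assume "x \<in> (\<lambda>f. restrict (\<lambda>u. \<phi> (f u)) VL) ` Iso X"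
        then obtain f where f: "f \<in> Iso X" and x: "x = restrict (\<lambda>u. \<phi> (f u)) VL" by auto
        have fP: "f \<in> VL \<rightarrow>\<^sub>E V" and inj: "inj_on f VL" and fa: "\<And>u v. u \<in> VL \<Longrightarrow> v \<in> VL \<Longrightarrow> adjL u v \<longleftrightarrow> adj (f u) (f v)"
          and fX: "f ` VL = X" using f unfolding Iso_def Em_def EmbS_def by auto
        have fM: "f u \<in> X" if "u \<in> VL" for u using fX that by auto
        have "x \<in> VL \<rightarrow>\<^sub>E VL" unfolding x using fM phiM by auto
        moreover have "inj_on x VL"
        proof (rule inj_onI)
          fix u v assume uv: "u \<in> VL" "v \<in> VL" "x u = x v"
          then have "\<phi> (f u) = \<phi> (f v)" unfolding x by simp
          then have "f u = f v" using pp fM uv by metis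
          then show "u = v" using inj uv by (meson inj_onD)
        qed
        moreover have "adjL u v \<longleftrightarrow> adjL (x u) (x v)" if "u \<in> VL" "v \<in> VL" for u v
          using fa[OF that] key[OF fM[OF that(1)] fM[OF that(2)]] that unfolding x by simp
        ultimately show "x \<in> Aut" unfolding Aut_def EmbS_def by auto
      qed
    qed
    then show ?thesis by (simp add: bij_betw_same_card)
  qed
  have "card Em = (\<Sum>X\<in>Good. card (Iso X))"
  proof -
    have "finite (Iso X)" for X using finEm unfolding Iso_def by auto
    moreover have "Iso X \<inter> Iso Y = {}" if "X \<noteq> Y" for X Y using that unfolding Iso_def by auto
    ultimately have "card (\<Union>X\<in>Good. Iso X) = (\<Sum>X\<in>Good. card (Iso X))"
      using finGood by (intro card_UN_disjoint) auto
    then show ?thesis using cover by simp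
  qed
  also have "\<dots> = (\<Sum>X\<in>Good. card Aut)" by (intro sum.cong refl cardIso)
  also have "\<dots> = card Good * card Aut" by simp
  also have "card Good = induced_count V E VL EL" unfolding Good_def induced_count_def by simp
  finally show ?thesis unfolding Em_def Aut_def adjL_def adj_def by simp
qed

lemma idx_inj:
  assumes "\<forall>p\<in>Ps. distinct p" "\<forall>p\<in>Ps. \<forall>q\<in>Ps. p \<noteq> q \<longrightarrow> set p \<inter> set q = {}"
    and "p \<in> Ps" "q \<in> Ps" "r < length p" "r' < length q" "p ! r = q ! r'"
  shows "p = q \<and> r = r'"
proof -
  have "p ! r \<in> set p" using assms(5) by (rule nth_mem)
  moreover have "q ! r' \<in> set q" using assms(6) by (rule nth_mem)
  ultimately have pq: "p = q" using assms(2,3,4,7) by auto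
  then show ?thesis using assms(1,3,5,6,7) nth_eq_iff_index_eq[of p r r'] by auto
qed

lemma finite_lists:
  assumes "finite (\<Union>p\<in>Ps. set p)" "\<forall>p\<in>Ps. p \<noteq> []" "\<forall>p\<in>Ps. \<forall>q\<in>Ps. p \<noteq> q \<longrightarrow> set p \<inter> set q = {}"
  shows "finite Ps"
proof -
  have "inj_on set Ps"
  proof (rule inj_onI)
    fix p q assume "p \<in> Ps" "q \<in> Ps" "set p = set q"
    show "p = q"
    proof (rule ccontr)
      assume "p \<noteq> q"
      then have "set p \<inter> set q = {}" using assms(3) \<open>p \<in> Ps\<close> \<open>q \<in> Ps\<close> by auto
      then have "set p = {}" using \<open>set p = set q\<close> by simp
      then show False using assms(2) \<open>p \<in> Ps\<close> by simp
    qed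
  qed
  moreover have "finite (set ` Ps)"
    by (rule finite_subset[of _ "Pow (\<Union>p\<in>Ps. set p)"]) (use assms(1) in auto)
  ultimately show ?thesis by (rule finite_imageD[rotated])
qed

lemma lf_model:
  assumes "linear_forest VL EL"
  obtains Ps where "finite Ps" "\<forall>p\<in>Ps. p \<noteq> []" "card VL = (\<Sum>p\<in>Ps. length p)"
    "bij_betw (\<lambda>(p, r). p ! r) (VLm Ps) VL"
    "\<forall>u\<in>VLm Ps. \<forall>v\<in>VLm Ps. adjLm u v \<longleftrightarrow> {(\<lambda>(p, r). p ! r) u, (\<lambda>(p, r). p ! r) v} \<in> EL"
proof -
  from assms obtain Ps where sg: "simple_graph VL EL" and
    ne: "\<forall>p\<in>Ps. p \<noteq> [] \<and> distinct p" and dj: "\<forall>p\<in>Ps. \<forall>q\<in>Ps. p \<noteq> q \<longrightarrow> set p \<inter> set q = {}"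
    and VLe: "VL = (\<Union>p\<in>Ps. set p)" and ELe: "EL = (\<Union>p\<in>Ps. path_edges p)"
    unfolding linear_forest_def by blast
  have finVL: "finite VL" using sg unfolding simple_graph_def by (rule conjunct1)
  have dist: "\<forall>p\<in>Ps. distinct p" and nem: "\<forall>p\<in>Ps. p \<noteq> []" using ne by auto
  have finP: "finite Ps" using finVL unfolding VLe by (rule finite_lists[OF _ nem dj])
  define \<alpha> where "\<alpha> = (\<lambda>(p::'a list, r::nat). p ! r)"
  have bij: "bij_betw \<alpha> (VLm Ps) VL"
    unfolding bij_betw_def
  proof
    show "inj_on \<alpha> (VLm Ps)"
    proof (rule inj_onI)
      fix u v assume u: "u \<in> VLm Ps" and v: "v \<in> VLm Ps" and e: "\<alpha> u = \<alpha> v"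
      obtain p r where pr: "u = (p, r)" by (cases u)
      obtain q r' where qr: "v = (q, r')" by (cases v)
      have "p \<in> Ps" "r < length p" "q \<in> Ps" "r' < length q" using u v pr qr unfolding VLm_def by auto
      moreover have "p ! r = q ! r'" using e pr qr unfolding \<alpha>_def by simp
      ultimately have "p = q \<and> r = r'" using idx_inj[OF dist dj, of p q r r'] by blast
      then show "u = v" using pr qr by simp
    qed
    show "\<alpha> ` VLm Ps = VL"
    proof
      show "\<alpha> ` VLm Ps \<subseteq> VL" unfolding VLe \<alpha>_def VLm_def by auto
      show "VL \<subseteq> \<alpha> ` VLm Ps"
      proof
        fix x assume "x \<in> VL"
        then obtain p where p: "p \<in> Ps" "x \<in> set p" unfolding VLe by auto
        then obtain r where r: "r < length p" "p ! r = x" by (auto simp: in_set_conv_nth)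
        have "(p, r) \<in> VLm Ps" using p r unfolding VLm_def by auto
        moreover have "\<alpha> (p, r) = x" using r unfolding \<alpha>_def by simp
        ultimately show "x \<in> \<alpha> ` VLm Ps" by (metis image_eqI)
      qed
    qed
  qed
  have adj: "adjLm u v \<longleftrightarrow> {\<alpha> u, \<alpha> v} \<in> EL" if u: "u \<in> VLm Ps" and v: "v \<in> VLm Ps" for u v
  proof -
    obtain p r where pr: "u = (p, r)" by (cases u)
    obtain q r' where qr: "v = (q, r')" by (cases v)
    have p: "p \<in> Ps" "r < length p" using u pr unfolding VLm_def by auto
    have q: "q \<in> Ps" "r' < length q" using v qr unfolding VLm_def by auto
    show ?thesis
    proof
      assume "adjLm u v"
      then have pq: "p = q" and dis: "r' = Suc r \<or> r = Suc r'" using pr qr unfolding adjLm_def by auto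
      from dis show "{\<alpha> u, \<alpha> v} \<in> EL"
      proof
        assume "r' = Suc r"
        then have "{p ! r, p ! Suc r} \<in> path_edges p" using q pq unfolding path_edges_def by auto
        then show ?thesis using p pq pr qr \<open>r' = Suc r\<close> unfolding ELe \<alpha>_def by auto
      next
        assume "r = Suc r'"
        then have "{p ! r', p ! Suc r'} \<in> path_edges p" using p pq unfolding path_edges_def by auto
        then show ?thesis using p pq pr qr \<open>r = Suc r'\<close> unfolding ELe \<alpha>_def by (auto simp: insert_commute)
      qed
    next
      assume "{\<alpha> u, \<alpha> v} \<in> EL"
      then obtain p' i where p': "p' \<in> Ps" "Suc i < length p'" and e: "{p ! r, q ! r'} = {p' ! i, p' ! Suc i}"
        unfolding ELe path_edges_def \<alpha>_def pr qr by auto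
      have I: "\<And>a b c d. a \<in> Ps \<Longrightarrow> c \<in> Ps \<Longrightarrow> b < length a \<Longrightarrow> d < length c \<Longrightarrow> a ! b = c ! d \<Longrightarrow> a = c \<and> b = d"
        using idx_inj[OF dist dj] by blast
      from e have "(p ! r = p' ! i \<and> q ! r' = p' ! Suc i) \<or> (p ! r = p' ! Suc i \<and> q ! r' = p' ! i)"
        by (auto simp: doubleton_eq_iff)
      then show "adjLm u v"
      proof
        assume h: "p ! r = p' ! i \<and> q ! r' = p' ! Suc i"
        have i1: "i < length p'" using p' by simp
        have "p = p' \<and> r = i" using I[OF p(1) p'(1) p(2) i1] h by simp
        moreover have "q = p' \<and> r' = Suc i" using I[OF q(1) p'(1) q(2) p'(2)] h by simp
        ultimately show ?thesis using pr qr unfolding adjLm_def by auto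
      next
        assume h: "p ! r = p' ! Suc i \<and> q ! r' = p' ! i"
        have i1: "i < length p'" using p' by simp
        have "p = p' \<and> r = Suc i" using I[OF p(1) p'(1) p(2) p'(2)] h by simp
        moreover have "q = p' \<and> r' = i" using I[OF q(1) p'(1) q(2) i1] h by simp
        ultimately show ?thesis using pr qr unfolding adjLm_def by auto
      qed
    qed
  qed
  have "card VL = card (VLm Ps)" using bij by (simp add: bij_betw_same_card)
  also have "\<dots> = (\<Sum>p\<in>Ps. length p)" unfolding VLm_def using finP by (simp add: card_SigmaI)
  finally show ?thesis using that finP nem bij adj unfolding \<alpha>_def by blast
qed

lemma cycle_edges_alt:
  assumes "c \<noteq> []"
  shows "cycle_edges c = {{c ! i, c ! ((i + 1) mod length c)} | i. i < length c}"
proof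
  show "cycle_edges c \<subseteq> {{c ! i, c ! ((i + 1) mod length c)} | i. i < length c}"
  proof
    fix e assume "e \<in> cycle_edges c"
    then consider (p) i where "Suc i < length c" "e = {c ! i, c ! Suc i}" | (w) "e = {last c, hd c}"
      unfolding cycle_edges_def path_edges_def by auto
    then show "e \<in> {{c ! i, c ! ((i + 1) mod length c)} | i. i < length c}"
    proof cases
      case p then show ?thesis by (intro CollectI exI[of _ i]) auto
    next
      case w
      have "last c = c ! (length c - 1)" "hd c = c ! 0" using assms by (simp_all add: last_conv_nth hd_conv_nth)
      moreover have "(length c - 1 + 1) mod length c = 0" using assms by simp
      ultimately show ?thesis using w assms by (intro CollectI exI[of _ "length c - 1"]) auto
    qed
  qed
  show "{{c ! i, c ! ((i + 1) mod length c)} | i. i < length c} \<subseteq> cycle_edges c"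
  proof
    fix e assume "e \<in> {{c ! i, c ! ((i + 1) mod length c)} | i. i < length c}"
    then obtain i where i: "i < length c" "e = {c ! i, c ! ((i + 1) mod length c)}" by auto
    show "e \<in> cycle_edges c"
    proof (cases "i + 1 < length c")
      case True
      then have "e = {c ! i, c ! Suc i}" using i by simp
      then show ?thesis using True unfolding cycle_edges_def path_edges_def by auto
    next
      case False
      then have "i = length c - 1" using i by simp
      then have "e = {last c, hd c}" using i assms by (simp add: last_conv_nth hd_conv_nth)
      then show ?thesis unfolding cycle_edges_def by auto
    qed
  qed
qed

lemma cyc_model:
  assumes "cycles_at_least K V E"
  obtains Cs where "finite Cs" "\<forall>c\<in>Cs. 3 \<le> length c \<and> K \<le> length c" "card V = (\<Sum>c\<in>Cs. length c)"
    "bij_betw (\<lambda>(c, x). c ! nat x) (VGm Cs) V"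
    "\<forall>u\<in>VGm Cs. \<forall>v\<in>VGm Cs. adjGm u v \<longleftrightarrow> {(\<lambda>(c, x). c ! nat x) u, (\<lambda>(c, x). c ! nat x) v} \<in> E"
proof -
  have "simple_graph V E \<and> (\<exists>Cs :: 'a list set.
        (\<forall>c\<in>Cs. distinct c \<and> length c \<ge> 3 \<and> length c \<ge> K) \<and>
        (\<forall>c\<in>Cs. \<forall>d\<in>Cs. c \<noteq> d \<longrightarrow> set c \<inter> set d = {}) \<and>
        V = (\<Union>c\<in>Cs. set c) \<and> E = (\<Union>c\<in>Cs. cycle_edges c))" using assms unfolding cycles_at_least_def .
  then obtain Cs :: "'a list set" where sg: "simple_graph V E" and
    ne: "\<forall>c\<in>Cs. distinct c \<and> length c \<ge> 3 \<and> length c \<ge> K" and dj: "\<forall>c\<in>Cs. \<forall>d\<in>Cs. c \<noteq> d \<longrightarrow> set c \<inter> set d = {}"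
    and Ve: "V = (\<Union>c\<in>Cs. set c)" and Ee: "E = (\<Union>c\<in>Cs. cycle_edges c)" by (elim conjE exE)
  have finV: "finite V" using sg unfolding simple_graph_def by (rule conjunct1)
  have dist: "\<forall>c\<in>Cs. distinct c" and nem: "\<forall>c\<in>Cs. c \<noteq> []" and c3: "\<forall>c\<in>Cs. 3 \<le> length c" using ne by auto
  have finC: "finite Cs" using finV unfolding Ve by (rule finite_lists[OF _ nem dj])
  define \<beta> where "\<beta> = (\<lambda>(c::'a list, x::int). c ! nat x)"
  have I: "\<And>a b c d. a \<in> Cs \<Longrightarrow> c \<in> Cs \<Longrightarrow> b < length a \<Longrightarrow> d < length c \<Longrightarrow> a ! b = c ! d \<Longrightarrow> a = c \<and> b = d"
    using idx_inj[OF dist dj] by blast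
  have bij: "bij_betw \<beta> (VGm Cs) V"
    unfolding bij_betw_def
  proof
    show "inj_on \<beta> (VGm Cs)"
    proof (rule inj_onI)
      fix u v assume u: "u \<in> VGm Cs" and v: "v \<in> VGm Cs" and e: "\<beta> u = \<beta> v"
      obtain c x where cx: "u = (c, x)" by (cases u)
      obtain d y where dy: "v = (d, y)" by (cases v)
      have h: "c \<in> Cs" "nat x < length c" "d \<in> Cs" "nat y < length d" "0 \<le> x" "0 \<le> y"
        using u v cx dy unfolding VGm_def by auto
      moreover have "c ! nat x = d ! nat y" using e cx dy unfolding \<beta>_def by simp
      ultimately have "c = d \<and> nat x = nat y" using I[of c d "nat x" "nat y"] by blast
      moreover have "x = y" if "nat x = nat y" using that h(5,6) by (metis int_nat_eq)
      ultimately show "u = v" using cx dy by simp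
    qed
    show "\<beta> ` VGm Cs = V"
    proof
      show "\<beta> ` VGm Cs \<subseteq> V"
      proof
        fix z assume "z \<in> \<beta> ` VGm Cs"
        then obtain c x where cx: "c \<in> Cs" "0 \<le> x" "x < int (length c)" "z = c ! nat x"
          unfolding \<beta>_def VGm_def by auto
        then have "nat x < length c" by simp
        then have "z \<in> set c" using cx(4) by simp
        then show "z \<in> V" using cx(1) unfolding Ve by blast
      qed
      show "V \<subseteq> \<beta> ` VGm Cs"
      proof
        fix z assume "z \<in> V"
        then obtain c where c: "c \<in> Cs" "z \<in> set c" unfolding Ve by auto
        then obtain r where r: "r < length c" "c ! r = z" by (auto simp: in_set_conv_nth)
        have "(c, int r) \<in> VGm Cs" using c r unfolding VGm_def by auto
        moreover have "\<beta> (c, int r) = z" using r unfolding \<beta>_def by simp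
        ultimately show "z \<in> \<beta> ` VGm Cs" by (metis image_eqI)
      qed
    qed
  qed
  have adj: "adjGm u v \<longleftrightarrow> {\<beta> u, \<beta> v} \<in> E" if u: "u \<in> VGm Cs" and v: "v \<in> VGm Cs" for u v
  proof -
    obtain c x where cx: "u = (c, x)" by (cases u)
    obtain d y where dy: "v = (d, y)" by (cases v)
    have c: "c \<in> Cs" "0 \<le> x" "x < int (length c)" using u cx unfolding VGm_def by auto
    have d: "d \<in> Cs" "0 \<le> y" "y < int (length d)" using v dy unfolding VGm_def by auto
    define m where "m = int (length c)"
    have m3: "m \<ge> 3" using c3 c unfolding m_def by auto
    have E_iff: "e \<in> E \<longleftrightarrow> (\<exists>c'\<in>Cs. \<exists>i<length c'. e = {c' ! i, c' ! ((i + 1) mod length c')})" for e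
    proof -
      have "e \<in> E \<longleftrightarrow> (\<exists>c'\<in>Cs. e \<in> cycle_edges c')" unfolding Ee by blast
      also have "\<dots> \<longleftrightarrow> (\<exists>c'\<in>Cs. \<exists>i<length c'. e = {c' ! i, c' ! ((i + 1) mod length c')})"
      proof (rule bex_cong[OF refl])
        fix c' assume "c' \<in> Cs"
        then have "c' \<noteq> []" using nem by auto
        then show "e \<in> cycle_edges c' \<longleftrightarrow> (\<exists>i<length c'. e = {c' ! i, c' ! ((i + 1) mod length c')})"
          unfolding cycle_edges_alt[OF \<open>c' \<noteq> []\<close>] by blast
      qed
      finally show ?thesis .
    qed
    have natmod: "nat ((z + 1) mod m) = (nat z + 1) mod length c" if "0 \<le> z" for z
      using that unfolding m_def by (simp add: nat_mod_distrib nat_add_distrib)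
    show ?thesis
    proof
      assume A: "adjGm u v"
      then have cd: "c = d" and md: "(y - x) mod m \<in> {1, m - 1}" using cx dy unfolding adjGm_def m_def by auto
      have "y = (x + 1) mod m \<or> y = (x - 1) mod m" using mod_adj_cases[of y m x] d md cd unfolding m_def by auto
      then show "{\<beta> u, \<beta> v} \<in> E"
      proof
        assume y: "y = (x + 1) mod m"
        have "nat y = (nat x + 1) mod length c" using natmod[OF c(2)] y by simp
        then show ?thesis unfolding E_iff using c cx dy cd unfolding \<beta>_def
          by (intro bexI[of _ c] exI[of _ "nat x"]) auto
      next
        assume y: "y = (x - 1) mod m"
        have "(y + 1) mod m = ((x - 1) mod m + 1) mod m" using y by simp
        also have "\<dots> = x" using c unfolding m_def by (simp add: mod_add_left_eq)
        finally have x: "x = (y + 1) mod m" by simp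
        have "nat x = (nat y + 1) mod length c" using natmod[OF d(2)] x by simp
        then show ?thesis unfolding E_iff using d cx dy cd unfolding \<beta>_def
          by (intro bexI[of _ c] exI[of _ "nat y"]) (auto simp: insert_commute)
      qed
    next
      assume "{\<beta> u, \<beta> v} \<in> E"
      then obtain c' i where c': "c' \<in> Cs" "i < length c'" and e: "{c ! nat x, d ! nat y} = {c' ! i, c' ! ((i + 1) mod length c')}"
        unfolding E_iff \<beta>_def cx dy by auto
      have i1: "(i + 1) mod length c' < length c'" using c' by (intro mod_less_divisor) auto
      have cn: "nat x < length c" "nat y < length d" using c d by auto
      from e have "(c ! nat x = c' ! i \<and> d ! nat y = c' ! ((i + 1) mod length c')) \<or>
                   (c ! nat x = c' ! ((i + 1) mod length c') \<and> d ! nat y = c' ! i)"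
        by (auto simp: doubleton_eq_iff)
      then show "adjGm u v"
      proof
        assume h: "c ! nat x = c' ! i \<and> d ! nat y = c' ! ((i + 1) mod length c')"
        have 1: "c = c' \<and> nat x = i" using I[OF c(1) c'(1) cn(1) c'(2)] h by simp
        have 2: "d = c' \<and> nat y = (i + 1) mod length c'" using I[OF d(1) c'(1) cn(2) i1] h by simp
        have "nat y = nat ((x + 1) mod m)" using 1 2 natmod[OF c(2)] by simp
        moreover have "0 \<le> (x + 1) mod m" using m3 by simp
        ultimately have "y = (x + 1) mod m" using d(2) eq_nat_nat_iff by blast
        moreover have "x mod m = x" using c unfolding m_def by simp
        ultimately have "(y - x) mod m \<in> {1, m - 1}" using mod_adj_iff(1)[OF m3, of x] by simp
        then show ?thesis using 1 2 cx dy unfolding adjGm_def m_def by simp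
      next
        assume h: "c ! nat x = c' ! ((i + 1) mod length c') \<and> d ! nat y = c' ! i"
        have 1: "c = c' \<and> nat x = (i + 1) mod length c'" using I[OF c(1) c'(1) cn(1) i1] h by simp
        have 2: "d = c' \<and> nat y = i" using I[OF d(1) c'(1) cn(2) c'(2)] h by simp
        have "length d = length c" using 1 2 by simp
        then have "nat x = nat ((y + 1) mod m)" using 1 2 natmod[OF d(2)] by simp
        moreover have "0 \<le> (y + 1) mod m" using m3 by simp
        ultimately have "x = (y + 1) mod m" using c(2) eq_nat_nat_iff by blast
        moreover have "y mod m = y" using d \<open>length d = length c\<close> unfolding m_def by simp
        ultimately have "(x - y) mod m \<in> {1, m - 1}" using mod_adj_iff(1)[OF m3, of y] by simp
        moreover have "(- (x - y)) mod m \<in> {1, m - 1} \<longleftrightarrow> (x - y) mod m \<in> {1, m - 1}"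
          using mod_neg_set(2)[of m "x - y"] m3 by linarith
        ultimately have "(y - x) mod m \<in> {1, m - 1}" by simp
        then show ?thesis using 1 2 cx dy unfolding adjGm_def m_def by simp
      qed
    qed
  qed
  have "card V = card (VGm Cs)" using bij by (simp add: bij_betw_same_card)
  also have "\<dots> = (\<Sum>c\<in>Cs. length c)" unfolding VGm_def using finC by (simp add: card_SigmaI)
  finally show ?thesis using that finC ne bij adj unfolding \<beta>_def by blast
qed

lemma main_count:
  assumes L: "linear_forest VL EL" and kdef: "card VL = k"
    and G: "cycles_at_least (k + 1) V E" and n: "card V = n"
    and Ps: "finite Ps" "\<forall>p\<in>Ps. p \<noteq> []" "card VL = (\<Sum>p\<in>Ps. length p)"
      "bij_betw (\<lambda>(p, r). p ! r) (VLm Ps) VL"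
      "\<forall>u\<in>VLm Ps. \<forall>v\<in>VLm Ps. adjLm u v \<longleftrightarrow> {(\<lambda>(p, r). p ! r) u, (\<lambda>(p, r). p ! r) v} \<in> EL"
  shows "int (induced_count V E VL EL * card (EmbS VL (\<lambda>u v. {u, v} \<in> EL) VL (\<lambda>u v. {u, v} \<in> EL)))
         = gg length Ps (int n) * int (card (OrS Ps))"
proof -
  obtain Cs where C: "finite Cs" "\<forall>c\<in>Cs. 3 \<le> length c \<and> k + 1 \<le> length c" "card V = (\<Sum>c\<in>Cs. length c)"
    "bij_betw (\<lambda>(c, x). c ! nat x) (VGm Cs) V"
    "\<forall>u\<in>VGm Cs. \<forall>v\<in>VGm Cs. adjGm u v \<longleftrightarrow> {(\<lambda>(c, x). c ! nat x) u, (\<lambda>(c, x). c ! nat x) v} \<in> E"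
    using cyc_model[OF G] by blast
  have finVL: "finite VL" using L unfolding linear_forest_def simple_graph_def by blast
  have finV: "finite V" using G unfolding cycles_at_least_def simple_graph_def by blast
  have JJk: "JJ length Ps = int k" using Ps(3) kdef unfolding JJ_def by simp
  interpret models Ps Cs
  proof
    show "finite Ps" "finite Cs" "\<forall>p\<in>Ps. p \<noteq> []" using Ps C by auto
    show "\<forall>c\<in>Cs. 3 \<le> length c" using C by auto
    show "\<forall>c\<in>Cs. JJ length Ps + 1 \<le> int (length c)" using C JJk by auto
  qed
  have "induced_count V E VL EL * card (EmbS VL (\<lambda>u v. {u, v} \<in> EL) VL (\<lambda>u v. {u, v} \<in> EL))
      = card (EmbS VL (\<lambda>u v. {u, v} \<in> EL) V (\<lambda>x y. {x, y} \<in> E))"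
    by (rule count_aut[OF finV finVL])
  also have "\<dots> = card (EmbS (VLm Ps) adjLm (VGm Cs) adjGm)"
    by (rule EmbS_iso[OF Ps(4) Ps(5) C(4) C(5)])
  also have "\<dots> = card (QaS length Cs Ps) * card (OrS Ps)" by (rule card_emb)
  finally have eq: "induced_count V E VL EL * card (EmbS VL (\<lambda>u v. {u, v} \<in> EL) VL (\<lambda>u v. {u, v} \<in> EL))
      = card (QaS length Cs Ps) * card (OrS Ps)" .
  have "int (card (QaS length Cs Ps)) = gg length Ps (\<Sum>c\<in>Cs. int (length c))"
  proof (rule Qa_formula)
    show "finite Cs" "finite Ps" using Ps C by auto
    show "\<forall>i\<in>Ps. 1 \<le> length i" using Ps(2) by (auto simp: Suc_le_eq)
    show "\<forall>c\<in>Cs. JJ length Ps + 1 \<le> int (length c)" using C JJk by auto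
  qed
  moreover have "(\<Sum>c\<in>Cs. int (length c)) = int n" using C(3) n by simp
  ultimately show ?thesis using eq by (metis of_nat_mult)
qed

theorem theorem3p3:
  fixes VL :: "'c set" and EL :: "'c set set"
    and V :: "'a set" and E :: "'a set set"
    and V' :: "'b set" and E' :: "'b set set"
    and k n :: nat
  assumes "linear_forest VL EL" and "card VL = k"
    and "n > 0"
    and "cycles_at_least (k + 1) V E" and "card V = n"
    and "cycles_at_least (k + 1) V' E'" and "card V' = n"
  shows "induced_count V E VL EL = induced_count V' E' VL EL"
proof -
  obtain Ps where Ps: "finite Ps" "\<forall>p\<in>Ps. p \<noteq> []" "card VL = (\<Sum>p\<in>Ps. length p)"
    "bij_betw (\<lambda>(p, r). p ! r) (VLm Ps) VL"
    "\<forall>u\<in>VLm Ps. \<forall>v\<in>VLm Ps. adjLm u v \<longleftrightarrow> {(\<lambda>(p, r). p ! r) u, (\<lambda>(p, r). p ! r) v} \<in> EL"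
    using lf_model[OF assms(1)] by blast
  define A where "A = card (EmbS VL (\<lambda>u v. {u, v} \<in> EL) VL (\<lambda>u v. {u, v} \<in> EL))"
  have finVL: "finite VL" using assms(1) unfolding linear_forest_def simple_graph_def by blast
  have "restrict id VL \<in> EmbS VL (\<lambda>u v. {u, v} \<in> EL) VL (\<lambda>u v. {u, v} \<in> EL)"
    unfolding EmbS_def by (auto simp: inj_on_def)
  moreover have "finite (EmbS VL (\<lambda>u v. {u, v} \<in> EL) VL (\<lambda>u v. {u, v} \<in> EL))"
    unfolding EmbS_def by (rule finite_subset[OF _ finite_PiE[OF finVL, of "\<lambda>_. VL"]]) (use finVL in auto)
  ultimately have A0: "A > 0" unfolding A_def by (metis card_gt_0_iff empty_iff)
  have 1: "int (induced_count V E VL EL * A) = gg length Ps (int n) * int (card (OrS Ps))"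
    unfolding A_def by (rule main_count[OF assms(1,2,4,5) Ps])
  have 2: "int (induced_count V' E' VL EL * A) = gg length Ps (int n) * int (card (OrS Ps))"
    unfolding A_def by (rule main_count[OF assms(1,2,6,7) Ps])
  from 1 2 have "induced_count V E VL EL * A = induced_count V' E' VL EL * A" by (metis of_nat_eq_iff)
  then show ?thesis using A0 by simp
qed

end
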